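(* Let $d_H$ be an $H$-metric on $\chi$ with parameter $\gamma$. Then GD-$k$ with rate $r=\frac{1}{\gamma k^2}$ is $(4mk+k^2)\gamma$-competitive for $k$-MPMD on $(\chi,d_H)$: for every instance $\sigma$ with $m$ requests (and for every way of making the arbitrary choices in the algorithm), the total cost of the perfect $k$-way matching output by GD-$k$ is at most $(4mk+k^2)\gamma\cdot\mathcal{OPT}(\sigma)$.
   Context: $k\ge2$. An $H$-metric with parameter $\gamma$ (integer, $1\le\gamma\le k-1$) is a map $d_H:\chi^k\to[0,\infty)$ that is invariant under permutation of its arguments, is zero iff all arguments are equal, satisfies $d_H(p_1,\ldots,p_k)\le d_H(p_1,\ldots,p_i,a,\ldots,a)+d_H(a,\ldots,a,p_{i+1},\ldots,p_k)$ for all $p_j,a\in\chi$ and $i\in\{1,\dots,k\}$ (with $k-i$, resp. $i$, copies of $a$), and satisfies: $d_H(p)\le d_H(p')$ whenever the set of distinct entries of $p$ is a proper subset of that of $p'$, and $d_H(p)\le\gamma d_H(p')$ whenever these sets are equal. $k$-MPMD: an instance is $\sigma=(V,\mathrm{atime},\mathrm{pos})$ with $V=\{u_1,\ldots,u_m\}$ ($m$ a multiple of $k$), nondecreasing arrival times $\mathrm{atime}:V\to\mathbb R_{\ge0}$ and positions $\mathrm{pos}:V\to\chi$; requests arrive over time and an online algorithm must partition $V$ into $k$-element groups (a perfect $k$-way matching), forming a group $\{v_1,\ldots,v_k\}$ of arrived, unmatched requests at some time $\tau$ at cost $d_H(\mathrm{pos}(v_1),\ldots,\mathrm{pos}(v_k))+\sum_{i=1}^k(\tau-\mathrm{atime}(v_i))$.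 $\mathcal{OPT}(\sigma)$ is the minimum, over all perfect $k$-way matchings $\mathcal M$ of $V$, of $\sum_{F\in\mathcal M}\big(d_H(\mathrm{pos}(F))+\sum_{v\in F}(\max_{u\in F}\mathrm{atime}(u)-\mathrm{atime}(v))\big)$. The metric $d$ on $\chi$ is $d(p,q):=d_H(p,q,\ldots,q)+d_H(q,p,\ldots,p)$ (first argument once, second $k-1$ times); for distinct requests, $\mathrm{opt\text{-}cost}(\{u,w\}):=d(\mathrm{pos}(u),\mathrm{pos}(w))+|\mathrm{atime}(u)-\mathrm{atime}(w)|$; $\delta(S)$ is the set of pairs of distinct requests with exactly one element in $S$. Algorithm GD-$k$ (Greedy Dual for $k$-MPMD) runs in continuous time from $0$. It maintains: a partition of the already-arrived requests into "active sets" ($A(v)$ denotes the active set containing $v$); a family $\mathcal M$ of disjoint $k$-element sets of requests (the groups matched so far); a request is free if it lies in no set of $\mathcal M$, and $\mathrm{free}(S)$ is the set of free requests of $S$; and dual values $y_S(\tau)\ge0$ for $S\subseteq V$, all initially $0$. When a request $v$ arrives, $A(v):=\{v\}$ is created. At every moment, for each active set $S$ with $\mathrm{free}(S)\ne\emptyset$, $y_S$ increases continuously at rate $r$; all other $y_S$ stay constant. Whenever a pair $e=\{u,w\}$ of arrived requests with $A(u)\ne A(w)$ becomes tight, i.e. $\sum_{S:e\in\delta(S)}y_S=\frac{1}{\gamma k^2}\mathrm{opt\text{-}cost}(e)$, the algorithm replaces $A(u)$ and $A(w)$ by the single active set $S=A(u)\cup A(w)$, marks $e$, and, while $|\mathrm{free}(S)|\ge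 k$, chooses arbitrarily $k$ free requests of $S$ and adds them as a group to $\mathcal M$ (they are matched at the current time). *)

theory Defs
  imports Complex_Main "HOL-Library.Multiset"
begin

text \<open>A k-tuple of points of chi is a list of length k; chi is the type 'p.\<close>

definition H_metric :: "nat \<Rightarrow> nat \<Rightarrow> ('p list \<Rightarrow> real) \<Rightarrow> bool" where
  "H_metric k \<gamma> dH \<longleftrightarrow>
     1 \<le> \<gamma> \<and> \<gamma> \<le> k - 1 \<and>
     (\<forall>ps. length ps = k \<longrightarrow> 0 \<le> dH ps) \<and>
     (\<forall>ps qs. length ps = k \<longrightarrow> mset qs = mset ps \<longrightarrow> dH qs = dH ps) \<and>
     (\<forall>ps. length ps = k \<longrightarrow> (dH ps = 0 \<longleftrightarrow> (\<forall>a\<in>set ps. \<forall>b\<in>set ps. a = b))) \<and>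
     (\<forall>ps a i. length ps = k \<longrightarrow> 1 \<le> i \<longrightarrow> i \<le> k \<longrightarrow>
        dH ps \<le> dH (take i ps @ replicate (k - i) a) + dH (replicate i a @ drop i ps)) \<and>
     (\<forall>ps qs. length ps = k \<longrightarrow> length qs = k \<longrightarrow> set ps \<subset> set qs \<longrightarrow> dH ps \<le> dH qs) \<and>
     (\<forall>ps qs. length ps = k \<longrightarrow> length qs = k \<longrightarrow> set ps = set qs \<longrightarrow> dH ps \<le> real \<gamma> * dH qs)"

definition induced_metric :: "nat \<Rightarrow> ('p list \<Rightarrow> real) \<Rightarrow> 'p \<Rightarrow> 'p \<Rightarrow> real" where
  "induced_metric k dH p q = dH (p # replicate (k - 1) q) + dH (q # replicate (k - 1) p)"

text \<open>Requests are the naturals 0..<m.\<close>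
definition opt_cost :: "nat \<Rightarrow> ('p list \<Rightarrow> real) \<Rightarrow> (nat \<Rightarrow> real) \<Rightarrow> (nat \<Rightarrow> 'p) \<Rightarrow> nat \<Rightarrow> nat \<Rightarrow> real" where
  "opt_cost k dH atime pos u w = induced_metric k dH (pos u) (pos w) + \<bar>atime u - atime w\<bar>"

text \<open>Cost of d_H on a group (set) of requests; the order is irrelevant by symmetry.\<close>
definition group_dist :: "('p list \<Rightarrow> real) \<Rightarrow> (nat \<Rightarrow> 'p) \<Rightarrow> nat set \<Rightarrow> real" where
  "group_dist dH pos F = dH (map pos (sorted_list_of_set F))"

definition perfect_kmatching :: "nat \<Rightarrow> nat \<Rightarrow> nat set set \<Rightarrow> bool" where
  "perfect_kmatching k m P \<longleftrightarrow>
     (\<forall>F\<in>P. F \<subseteq> {..<m} \<and> card F = k) \<and> \<Union>P = {..<m} \<and>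
     (\<forall>F\<in>P. \<forall>G\<in>P. F \<noteq> G \<longrightarrow> F \<inter> G = {})"

definition matching_cost :: "('p list \<Rightarrow> real) \<Rightarrow> (nat \<Rightarrow> real) \<Rightarrow> (nat \<Rightarrow> 'p) \<Rightarrow> nat set set \<Rightarrow> real" where
  "matching_cost dH atime pos P =
     (\<Sum>F\<in>P. group_dist dH pos F + (\<Sum>v\<in>F. Max (atime ` F) - atime v))"

definition OPT :: "nat \<Rightarrow> nat \<Rightarrow> ('p list \<Rightarrow> real) \<Rightarrow> (nat \<Rightarrow> real) \<Rightarrow> (nat \<Rightarrow> 'p) \<Rightarrow> real" where
  "OPT k m dH atime pos = Min (matching_cost dH atime pos ` {P. perfect_kmatching k m P})"

text \<open>A configuration: (current time, active sets, matched groups with their matching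
  times, dual values y_S).\<close>
type_synonym config = "real \<times> nat set set \<times> (nat set \<times> real) set \<times> (nat set \<Rightarrow> real)"

definition matched :: "(nat set \<times> real) set \<Rightarrow> nat set" where
  "matched M = \<Union>(fst ` M)"

definition free :: "(nat set \<times> real) set \<Rightarrow> nat set \<Rightarrow> nat set" where
  "free M S = S - matched M"

definition dual_sum :: "nat \<Rightarrow> (nat set \<Rightarrow> real) \<Rightarrow> nat \<Rightarrow> nat \<Rightarrow> real" where
  "dual_sum m y u w = (\<Sum>S\<in>{S. S \<subseteq> {..<m} \<and> (u \<in> S) \<noteq> (w \<in> S)}. y S)"

definition threshold :: "nat \<Rightarrow> nat \<Rightarrow> ('p list \<Rightarrow> real) \<Rightarrow> (nat \<Rightarrow> real) \<Rightarrow> (nat \<Rightarrow> 'p) \<Rightarrow> nat \<Rightarrow> nat \<Rightarrow> real" where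
  "threshold k \<gamma> dH atime pos u w = opt_cost k dH atime pos u w / (real \<gamma> * real k ^ 2)"

definition cross :: "nat set set \<Rightarrow> nat \<Rightarrow> nat \<Rightarrow> bool" where
  "cross A u w \<longleftrightarrow> u \<in> \<Union>A \<and> w \<in> \<Union>A \<and> u \<noteq> w \<and> \<not> (\<exists>S\<in>A. u \<in> S \<and> w \<in> S)"

inductive gd_step :: "nat \<Rightarrow> nat \<Rightarrow> real \<Rightarrow> ('p list \<Rightarrow> real) \<Rightarrow> nat \<Rightarrow> (nat \<Rightarrow> real) \<Rightarrow> (nat \<Rightarrow> 'p)
    \<Rightarrow> config \<Rightarrow> config \<Rightarrow> bool"
  for k \<gamma> r dH m atime pos where
  advance:
    "\<lbrakk> t < t';
       \<forall>v<m. atime v < t' \<longrightarrow> v \<in> \<Union>A;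
       y' = (\<lambda>S. if S \<in> A \<and> free M S \<noteq> {} then y S + r * (t' - t) else y S);
       \<forall>u w. cross A u w \<longrightarrow>
          dual_sum m y u w < threshold k \<gamma> dH atime pos u w \<and>
          dual_sum m y' u w \<le> threshold k \<gamma> dH atime pos u w \<rbrakk>
     \<Longrightarrow> gd_step k \<gamma> r dH m atime pos (t, A, M, y) (t', A, M, y')"
| arrive:
    "\<lbrakk> v < m; v \<notin> \<Union>A; atime v = t \<rbrakk>
     \<Longrightarrow> gd_step k \<gamma> r dH m atime pos (t, A, M, y) (t, insert {v} A, M, y)"
| merge:
    "\<lbrakk> Su \<in> A; Sw \<in> A; u \<in> Su; w \<in> Sw; Su \<noteq> Sw;
       dual_sum m y u w = threshold k \<gamma> dH atime pos u w;
       S = Su \<union> Sw;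
       \<forall>G\<in>Gs. G \<subseteq> free M S \<and> card G = k;
       \<forall>G\<in>Gs. \<forall>G'\<in>Gs. G \<noteq> G' \<longrightarrow> G \<inter> G' = {};
       card (free M S - \<Union>Gs) < k \<rbrakk>
     \<Longrightarrow> gd_step k \<gamma> r dH m atime pos (t, A, M, y)
           (t, insert S (A - {Su, Sw}), M \<union> (\<lambda>G. (G, t)) ` Gs, y)"

definition gd_init :: config where
  "gd_init = (0, {}, {}, (\<lambda>S. 0))"

definition gd_run :: "nat \<Rightarrow> nat \<Rightarrow> real \<Rightarrow> ('p list \<Rightarrow> real) \<Rightarrow> nat \<Rightarrow> (nat \<Rightarrow> real) \<Rightarrow> (nat \<Rightarrow> 'p)
    \<Rightarrow> (nat set \<times> real) set \<Rightarrow> bool" where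
  "gd_run k \<gamma> r dH m atime pos M \<longleftrightarrow>
     (\<exists>t A y. (gd_step k \<gamma> r dH m atime pos)\<^sup>*\<^sup>* gd_init (t, A, M, y)) \<and> matched M = {..<m}"

definition alg_cost :: "('p list \<Rightarrow> real) \<Rightarrow> (nat \<Rightarrow> real) \<Rightarrow> (nat \<Rightarrow> 'p) \<Rightarrow> (nat set \<times> real) set \<Rightarrow> real" where
  "alg_cost dH atime pos M = (\<Sum>(G, \<tau>)\<in>M. group_dist dH pos G + (\<Sum>v\<in>G. \<tau> - atime v))"

end

theory Submission
  imports Defs
begin
locale gdk =
  fixes k \<gamma> :: nat and dH :: "'p list \<Rightarrow> real"
  assumes k2: "k \<ge> 2" and H: "H_metric k \<gamma> dH"
begin

abbreviation d where "d \<equiv> induced_metric k dH"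

lemmas H' = H[unfolded H_metric_def]
lemma gam1: "1 \<le> \<gamma>" using H'[THEN conjunct1] .

lemma dH_nonneg: "length ps = k \<Longrightarrow> 0 \<le> dH ps"
  using H'[THEN conjunct2, THEN conjunct2, THEN conjunct1] by blast

lemma dH_perm: "length ps = k \<Longrightarrow> mset qs = mset ps \<Longrightarrow> dH qs = dH ps"
  using H'[THEN conjunct2, THEN conjunct2, THEN conjunct2, THEN conjunct1] by blast

lemma dH_zero: "length ps = k \<Longrightarrow> (dH ps = 0 \<longleftrightarrow> (\<forall>a\<in>set ps. \<forall>b\<in>set ps. a = b))"
  using H'[THEN conjunct2, THEN conjunct2, THEN conjunct2, THEN conjunct2, THEN conjunct1] by blast

lemma dH_rep: "dH (replicate k a) = 0"
  using dH_zero[of "replicate k a"] by simp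

lemma dH_tri: "length ps = k \<Longrightarrow> 1 \<le> i \<Longrightarrow> i \<le> k \<Longrightarrow>
        dH ps \<le> dH (take i ps @ replicate (k - i) a) + dH (replicate i a @ drop i ps)"
  using H'[THEN conjunct2, THEN conjunct2, THEN conjunct2, THEN conjunct2, THEN conjunct2, THEN conjunct1] by blast

lemma dH_ssub: "length ps = k \<Longrightarrow> length qs = k \<Longrightarrow> set ps \<subset> set qs \<Longrightarrow> dH ps \<le> dH qs"
  using H'[THEN conjunct2, THEN conjunct2, THEN conjunct2, THEN conjunct2, THEN conjunct2, THEN conjunct2, THEN conjunct1] by blast

lemma dH_seq: "length ps = k \<Longrightarrow> length qs = k \<Longrightarrow> set ps = set qs \<Longrightarrow> dH ps \<le> real \<gamma> * dH qs"
  using H'[THEN conjunct2, THEN conjunct2, THEN conjunct2, THEN conjunct2, THEN conjunct2, THEN conjunct2, THEN conjunct2] by blast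

lemma dH_sub: assumes "length ps = k" "length qs = k" "set ps \<subseteq> set qs"
  shows "dH ps \<le> real \<gamma> * dH qs"
proof (cases "set ps = set qs")
  case True then show ?thesis using dH_seq assms by blast
next
  case False
  then have "set ps \<subset> set qs" using assms by auto
  then have "dH ps \<le> dH qs" using dH_ssub assms by blast
  moreover have "1 * dH qs \<le> real \<gamma> * dH qs"
    by (rule mult_right_mono) (use gam1 dH_nonneg[OF assms(2)] in auto)
  ultimately show ?thesis by linarith
qed

lemma len_rep: "length (x # replicate (k - 1) y) = k" using k2 by simp

lemma d_nonneg: "0 \<le> d p q"
  unfolding induced_metric_def using dH_nonneg[OF len_rep[of p q]] dH_nonneg[OF len_rep[of q p]]
  by simp

lemma d_refl: "d p p = 0"
proof -
  have "p # replicate (k - 1) p = replicate k p" using k2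
    using k2 by (cases k) auto
  then show ?thesis unfolding induced_metric_def using dH_rep by simp
qed

lemma d_sym: "d p q = d q p"
  unfolding induced_metric_def by simp

lemma d_tri: "d p q \<le> d p s + d s q"
proof -
  have a: "dH (p # replicate (k - 1) q) \<le> dH (p # replicate (k - 1) s) + dH (s # replicate (k - 1) q)"
    using dH_tri[OF len_rep[of p q], of 1 s] k2 by simp
  have b: "dH (q # replicate (k - 1) p) \<le> dH (q # replicate (k - 1) s) + dH (s # replicate (k - 1) p)"
    using dH_tri[OF len_rep[of q p], of 1 s] k2 by simp
  show ?thesis unfolding induced_metric_def using a b by linarith
qed

lemma dH_star_aux:
  "length (filter (\<lambda>x. x \<noteq> a) ps) \<le> n \<Longrightarrow> length ps = k \<Longrightarrow> dH ps \<le> sum_list (map (d a) ps)"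
proof (induction n arbitrary: ps)
  case 0
  then have "\<forall>x\<in>set ps. x = a" by (auto simp: filter_empty_conv)
  then have "ps = replicate k a" using replicate_length_same[of ps a] 0 by simp
  then show ?case using dH_rep d_refl by (simp add: sum_list_replicate)
next
  case (Suc n)
  show ?case
  proof (cases "\<exists>q\<in>set ps. q \<noteq> a")
    case False
    then have "ps = replicate k a" using replicate_length_same[of ps a] Suc.prems by auto
    then show ?thesis using dH_rep d_refl by (simp add: sum_list_replicate)
  next
    case True
    then obtain q where q: "q \<in> set ps" "q \<noteq> a" by blast
    define ps1 where "ps1 = remove1 q ps @ [q]"
    have lr: "length (remove1 q ps) = k - 1" using q Suc.prems by (simp add: length_remove1)
    have l1: "length ps1 = k" unfolding ps1_def using lr k2 by simp
    have m1: "mset ps1 = mset ps" unfolding ps1_def using q by simp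
    have e1: "dH ps = dH ps1" using dH_perm[OF Suc.prems(2) m1] by simp
    have tk: "take (k - 1) ps1 = remove1 q ps" unfolding ps1_def using lr by simp
    have dr: "drop (k - 1) ps1 = [q]" unfolding ps1_def using lr by simp
    have kk: "k - (k - 1) = 1" using k2 by simp
    have t: "dH ps1 \<le> dH (remove1 q ps @ [a]) + dH (replicate (k - 1) a @ [q])"
      using dH_tri[OF l1, of "k - 1" a] k2 tk dr kk by simp
    have "mset (replicate (k - 1) a @ [q]) = mset (q # replicate (k - 1) a)" by simp
    then have e2: "dH (replicate (k - 1) a @ [q]) = dH (q # replicate (k - 1) a)"
      using dH_perm[OF len_rep[of q a], of "replicate (k - 1) a @ [q]"] by simp
    have e3: "dH (q # replicate (k - 1) a) \<le> d a q"
      unfolding induced_metric_def using dH_nonneg[OF len_rep[of a q]] by simp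
    have fl: "length (filter (\<lambda>x. x \<noteq> a) (remove1 q ps @ [a])) \<le> n"
    proof -
      have "filter (\<lambda>x. x \<noteq> a) (remove1 q ps @ [a]) = filter (\<lambda>x. x \<noteq> a) (remove1 q ps)" by simp
      moreover have "filter (\<lambda>x. x \<noteq> a) (remove1 q ps) = remove1 q (filter (\<lambda>x. x \<noteq> a) ps)"
        using q(2) by (induction ps) auto
      moreover have "q \<in> set (filter (\<lambda>x. x \<noteq> a) ps)" using q by simp
      ultimately show ?thesis using Suc.prems(1) by (simp add: length_remove1)
    qed
    have IH: "dH (remove1 q ps @ [a]) \<le> sum_list (map (d a) (remove1 q ps @ [a]))"
      using Suc.IH[OF fl] lr k2 by simp
    have s: "sum_list (map (d a) ps) = d a q + sum_list (map (d a) (remove1 q ps))"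
      by (rule sum_list_map_remove1[OF q(1)])
    have "sum_list (map (d a) (remove1 q ps @ [a])) = sum_list (map (d a) (remove1 q ps))"
      using d_refl by simp
    then show ?thesis using e1 t e2 e3 IH s by linarith
  qed
qed

lemma dH_star: "length ps = k \<Longrightarrow> dH ps \<le> sum_list (map (d a) ps)"
  using dH_star_aux by blast

end

locale gd = gdk k \<gamma> dH for k \<gamma> :: nat and dH :: "'p list \<Rightarrow> real" +
  fixes m :: nat and atime :: "nat \<Rightarrow> real" and pos :: "nat \<Rightarrow> 'p"
begin

definition c0 :: real where "c0 = real \<gamma> * real k ^ 2"
definition r :: real where "r = 1 / c0"
abbreviation thr where "thr \<equiv> threshold k \<gamma> dH atime pos"
definition Yv :: "(nat set \<Rightarrow> real) \<Rightarrow> real" where "Yv y = (\<Sum>S\<in>Pow {..<m}. y S)"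
definition wt :: "nat set \<Rightarrow> nat set \<Rightarrow> nat \<Rightarrow> nat \<Rightarrow> real" where
  "wt S S' u w = (if S' \<subseteq> S then (if u \<in> S' \<and> w \<in> S' then 0 else if u \<in> S' \<or> w \<in> S' then 1 else 2) else 0)"

lemma c0_pos: "0 < c0"
  unfolding c0_def using gam1 k2 by simp

lemma r_pos: "0 < r" unfolding r_def using c0_pos by simp

lemma thr_eq: "thr u w = (d (pos u) (pos w) + \<bar>atime u - atime w\<bar>) / c0"
  unfolding threshold_def opt_cost_def c0_def by simp

lemma thr_nonneg: "0 \<le> thr u w"
  unfolding thr_eq using c0_pos d_nonneg by simp

lemma wt_nonneg: "0 \<le> wt S S' u w" unfolding wt_def by auto
lemma wt_le2: "wt S S' u w \<le> 2" unfolding wt_def by auto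
lemma wt_sym: "wt S S' u w = wt S S' w u" unfolding wt_def by auto

lemma dual_sum_alt: "dual_sum m y u w = (\<Sum>S\<in>Pow {..<m}. if (u \<in> S) \<noteq> (w \<in> S) then y S else 0)"
proof -
  have "{S. S \<subseteq> {..<m} \<and> (u \<in> S) \<noteq> (w \<in> S)} = {S \<in> Pow {..<m}. (u \<in> S) \<noteq> (w \<in> S)}" by auto
  moreover have "(\<Sum>S\<in>{S \<in> Pow {..<m}. (u \<in> S) \<noteq> (w \<in> S)}. y S) = (\<Sum>S\<in>Pow {..<m}. if (u \<in> S) \<noteq> (w \<in> S) then y S else 0)"
    by (rule sum.inter_filter) simp
  ultimately show ?thesis unfolding dual_sum_def by simp
qed

definition gdinv :: "real \<Rightarrow> nat set set \<Rightarrow> (nat set \<times> real) set \<Rightarrow> (nat set \<Rightarrow> real) \<Rightarrow> bool" where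
 "gdinv t A M y \<longleftrightarrow>
 (\<forall>S\<in>A. S \<noteq> {} \<and> S \<subseteq> {..<m}) \<and>
 (\<forall>S\<in>A. \<forall>T\<in>A. S \<noteq> T \<longrightarrow> S \<inter> T = {}) \<and>
 (\<forall>v\<in>\<Union>A. atime v \<le> t) \<and>
 (\<forall>S. y S \<noteq> 0 \<longrightarrow> (\<exists>T\<in>A. S \<subseteq> T)) \<and>
 (\<forall>S. 0 \<le> y S) \<and>
 (\<forall>S. y S \<noteq> 0 \<longrightarrow> \<not> k dvd card S) \<and>
 (\<forall>u\<in>\<Union>A. (\<Sum>S\<in>Pow {..<m}. if u \<in> S then y S else 0) \<le> r * (t - atime u)) \<and>
 (\<forall>u<m. \<forall>w<m. u \<noteq> w \<longrightarrow> dual_sum m y u w \<le> thr u w) \<and>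
 finite M \<and>
 (\<forall>p\<in>M. card (fst p) = k \<and> (\<exists>T\<in>A. fst p \<subseteq> T)) \<and>
 (\<forall>p\<in>M. \<forall>q\<in>M. p \<noteq> q \<longrightarrow> fst p \<inter> fst q = {}) \<and>
 (\<forall>S\<in>A. card (free M S) < k) \<and>
 (\<forall>S\<in>A. \<forall>u\<in>S. \<forall>w\<in>S. d (pos u) (pos w) \<le> c0 * (\<Sum>S'\<in>Pow {..<m}. y S' * wt S S' u w)) \<and>
 (\<Sum>p\<in>M. \<Sum>v\<in>fst p. snd p - atime v) + (\<Sum>v\<in>\<Union>A - matched M. t - atime v) \<le> real (k - 1) * c0 * Yv y \<and>
 (\<Sum>p\<in>M. group_dist dH pos (fst p)) \<le> 2 * c0 * real k * real (card M) * Yv y"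

lemma invD:
  assumes "gdinv t A M y"
  shows I1: "\<forall>S\<in>A. S \<noteq> {} \<and> S \<subseteq> {..<m}"
  and I2: "\<forall>S\<in>A. \<forall>T\<in>A. S \<noteq> T \<longrightarrow> S \<inter> T = {}"
  and I3: "\<forall>v\<in>\<Union>A. atime v \<le> t"
  and I5: "\<forall>S. y S \<noteq> 0 \<longrightarrow> (\<exists>T\<in>A. S \<subseteq> T)"
  and I6: "\<forall>S. 0 \<le> y S"
  and I7: "\<forall>S. y S \<noteq> 0 \<longrightarrow> \<not> k dvd card S"
  and I8: "\<forall>u\<in>\<Union>A. (\<Sum>S\<in>Pow {..<m}. if u \<in> S then y S else 0) \<le> r * (t - atime u)"
  and I9: "\<forall>u<m. \<forall>w<m. u \<noteq> w \<longrightarrow> dual_sum m y u w \<le> thr u w"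
  and IM: "finite M"
  and I10: "\<forall>p\<in>M. card (fst p) = k \<and> (\<exists>T\<in>A. fst p \<subseteq> T)"
  and I10b: "\<forall>p\<in>M. \<forall>q\<in>M. p \<noteq> q \<longrightarrow> fst p \<inter> fst q = {}"
  and I11: "\<forall>S\<in>A. card (free M S) < k"
  and I13: "\<forall>S\<in>A. \<forall>u\<in>S. \<forall>w\<in>S. d (pos u) (pos w) \<le> c0 * (\<Sum>S'\<in>Pow {..<m}. y S' * wt S S' u w)"
  and I14: "(\<Sum>p\<in>M. \<Sum>v\<in>fst p. snd p - atime v) + (\<Sum>v\<in>\<Union>A - matched M. t - atime v) \<le> real (k - 1) * c0 * Yv y"
  and I15: "(\<Sum>p\<in>M. group_dist dH pos (fst p)) \<le> 2 * c0 * real k * real (card M) * Yv y"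
  using assms unfolding gdinv_def
  apply -
  apply (elim conjE, assumption)+
  done

lemma invI:
  assumes "\<forall>S\<in>A. S \<noteq> {} \<and> S \<subseteq> {..<m}"
  and "\<forall>S\<in>A. \<forall>T\<in>A. S \<noteq> T \<longrightarrow> S \<inter> T = {}"
  and "\<forall>v\<in>\<Union>A. atime v \<le> t"
  and "\<forall>S. y S \<noteq> 0 \<longrightarrow> (\<exists>T\<in>A. S \<subseteq> T)"
  and "\<forall>S. 0 \<le> y S"
  and "\<forall>S. y S \<noteq> 0 \<longrightarrow> \<not> k dvd card S"
  and "\<forall>u\<in>\<Union>A. (\<Sum>S\<in>Pow {..<m}. if u \<in> S then y S else 0) \<le> r * (t - atime u)"
  and "\<forall>u<m. \<forall>w<m. u \<noteq> w \<longrightarrow> dual_sum m y u w \<le> thr u w"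
  and "finite M"
  and "\<forall>p\<in>M. card (fst p) = k \<and> (\<exists>T\<in>A. fst p \<subseteq> T)"
  and "\<forall>p\<in>M. \<forall>q\<in>M. p \<noteq> q \<longrightarrow> fst p \<inter> fst q = {}"
  and "\<forall>S\<in>A. card (free M S) < k"
  and "\<forall>S\<in>A. \<forall>u\<in>S. \<forall>w\<in>S. d (pos u) (pos w) \<le> c0 * (\<Sum>S'\<in>Pow {..<m}. y S' * wt S S' u w)"
  and "(\<Sum>p\<in>M. \<Sum>v\<in>fst p. snd p - atime v) + (\<Sum>v\<in>\<Union>A - matched M. t - atime v) \<le> real (k - 1) * c0 * Yv y"
  and "(\<Sum>p\<in>M. group_dist dH pos (fst p)) \<le> 2 * c0 * real k * real (card M) * Yv y"
  shows "gdinv t A M y"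
  unfolding gdinv_def by (intro conjI; rule assms)

lemma inv_init: "gdinv 0 {} {} (\<lambda>S. 0)"
  by (rule invI) (auto simp: dual_sum_def thr_nonneg Yv_def matched_def)

lemma sum_wt_nonneg: "(\<forall>S. 0 \<le> y S) \<Longrightarrow> 0 \<le> (\<Sum>S'\<in>Pow {..<m}. y S' * wt S S' u w)"
  by (simp add: sum_nonneg wt_nonneg)

lemma matched_sub: "gdinv t A M y \<Longrightarrow> matched M \<subseteq> \<Union>A"
  using I10 unfolding matched_def by fastforce

lemma inv_arrive:
  assumes iv: "gdinv t A M y" and v: "v < m" "v \<notin> \<Union>A" "atime v = t"
  shows "gdinv t (insert {v} A) M y"
proof -
  note I = invD[OF iv]
  have ms: "matched M \<subseteq> \<Union>A" using matched_sub[OF iv] .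
  have "\<Union>A \<subseteq> {..<m}" using I(1) by blast
  then have fin: "finite (\<Union>A)" using finite_subset by blast
  have s0: "(\<Sum>S\<in>Pow {..<m}. if v \<in> S then y S else 0) = 0"
  proof (rule sum.neutral, rule ballI)
    fix S assume "S \<in> Pow {..<m}"
    show "(if v \<in> S then y S else 0) = 0"
    proof (cases "v \<in> S")
      case True
      have "y S = 0"
      proof (rule ccontr)
        assume "y S \<noteq> 0"
        then obtain T where "T \<in> A" "S \<subseteq> T" using I(4) by blast
        then show False using True v(2) by blast
      qed
      then show ?thesis by simp
    qed simp
  qed
  have fr: "\<Union>(insert {v} A) - matched M = insert v (\<Union>A - matched M)" using ms v(2) by auto
  have s14: "(\<Sum>w\<in>\<Union>(insert {v} A) - matched M. t - atime w) = (\<Sum>w\<in>\<Union>A - matched M. t - atime w)"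
    unfolding fr using v fin by (simp add: sum.insert)
  show ?thesis
  proof (rule invI)
    show "\<forall>S\<in>insert {v} A. S \<noteq> {} \<and> S \<subseteq> {..<m}" using I(1) v(1) by auto
    show "\<forall>S\<in>insert {v} A. \<forall>T\<in>insert {v} A. S \<noteq> T \<longrightarrow> S \<inter> T = {}"
      using I(2) v(2) by blast
    show "\<forall>w\<in>\<Union>(insert {v} A). atime w \<le> t" using I(3) v(3) by auto
    show "\<forall>S. y S \<noteq> 0 \<longrightarrow> (\<exists>T\<in>insert {v} A. S \<subseteq> T)" using I(4) by blast
    show "\<forall>S. 0 \<le> y S" by (rule I(5))
    show "\<forall>S. y S \<noteq> 0 \<longrightarrow> \<not> k dvd card S" by (rule I(6))
    show "\<forall>u\<in>\<Union>(insert {v} A). (\<Sum>S\<in>Pow {..<m}. if u \<in> S then y S else 0) \<le> r * (t - atime u)"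
    proof
      fix u assume "u \<in> \<Union>(insert {v} A)"
      then have "u = v \<or> u \<in> \<Union>A" by blast
      then show "(\<Sum>S\<in>Pow {..<m}. if u \<in> S then y S else 0) \<le> r * (t - atime u)"
        using I(7) s0 v(3) by auto
    qed
    show "\<forall>u<m. \<forall>w<m. u \<noteq> w \<longrightarrow> dual_sum m y u w \<le> thr u w" by (rule I(8))
    show "finite M" by (rule I(9))
    show "\<forall>p\<in>M. card (fst p) = k \<and> (\<exists>T\<in>insert {v} A. fst p \<subseteq> T)" using I(10) by blast
    show "\<forall>p\<in>M. \<forall>q\<in>M. p \<noteq> q \<longrightarrow> fst p \<inter> fst q = {}" by (rule I(11))
    show "\<forall>S\<in>insert {v} A. card (free M S) < k"
    proof
      fix S assume "S \<in> insert {v} A"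
      moreover have "card (free M {v}) < k"
      proof -
        have "card (free M {v}) \<le> card {v}" by (rule card_mono) (auto simp: free_def)
        then show ?thesis using k2 by simp
      qed
      ultimately show "card (free M S) < k" using I(12) by blast
    qed
    show "\<forall>S\<in>insert {v} A. \<forall>u\<in>S. \<forall>w\<in>S. d (pos u) (pos w) \<le> c0 * (\<Sum>S'\<in>Pow {..<m}. y S' * wt S S' u w)"
    proof (intro ballI)
      fix S u w assume "S \<in> insert {v} A" "u \<in> S" "w \<in> S"
      then consider "S = {v}" "u = v" "w = v" | "S \<in> A" by auto
      then show "d (pos u) (pos w) \<le> c0 * (\<Sum>S'\<in>Pow {..<m}. y S' * wt S S' u w)"
      proof cases
        case 1
        have "0 \<le> c0 * (\<Sum>S'\<in>Pow {..<m}. y S' * wt S S' u w)"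
          using sum_wt_nonneg[OF I(5)] c0_pos by simp
        then show ?thesis using 1 d_refl by simp
      next
        case 2 then show ?thesis using I(13) \<open>u \<in> S\<close> \<open>w \<in> S\<close> by blast
      qed
    qed
    show "(\<Sum>p\<in>M. \<Sum>v\<in>fst p. snd p - atime v) + (\<Sum>v\<in>\<Union>(insert {v} A) - matched M. t - atime v) \<le> real (k - 1) * c0 * Yv y"
      using I(14) s14 by simp
    show "(\<Sum>p\<in>M. group_dist dH pos (fst p)) \<le> 2 * c0 * real k * real (card M) * Yv y" by (rule I(15))
  qed
qed

end

context gd begin

lemma wt_merge:
  assumes "Su \<inter> Sw = {}" "a \<in> Su" "x \<in> Su" "z \<in> Sw" "b \<in> Sw" "S' \<noteq> {}"
    "S' \<subseteq> Su \<or> S' \<subseteq> Sw \<or> (S' \<inter> Su = {} \<and> S' \<inter> Sw = {})"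
  shows "wt Su S' a x + (if (x \<in> S') \<noteq> (z \<in> S') then 1 else 0) + wt Sw S' z b \<le> wt (Su \<union> Sw) S' a b"
  using assms(7)
proof (elim disjE)
  assume h: "S' \<subseteq> Su"
  then have "\<not> S' \<subseteq> Sw" using assms(1,6) by blast
  moreover have "z \<notin> S'" "b \<notin> S'" using h assms(1,4,5) by blast+
  moreover have "S' \<subseteq> Su \<union> Sw" using h by blast
  ultimately show ?thesis using h unfolding wt_def by auto
next
  assume h: "S' \<subseteq> Sw"
  then have "\<not> S' \<subseteq> Su" using assms(1,6) by blast
  moreover have "x \<notin> S'" "a \<notin> S'" using h assms(1,2,3) by blast+
  moreover have "S' \<subseteq> Su \<union> Sw" using h by blast
  ultimately show ?thesis using h unfolding wt_def by auto
next
  assume h: "S' \<inter> Su = {} \<and> S' \<inter> Sw = {}"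
  then have "\<not> S' \<subseteq> Su" "\<not> S' \<subseteq> Sw" using assms(6) by blast+
  moreover have "x \<notin> S'" "z \<notin> S'" using h assms(3,4) by blast+
  ultimately show ?thesis unfolding wt_def by auto
qed

lemma Yv_nonneg: "(\<forall>S. 0 \<le> y S) \<Longrightarrow> 0 \<le> Yv y"
  unfolding Yv_def by (simp add: sum_nonneg)

lemma sum_wt_le: assumes "\<forall>S. 0 \<le> y S"
  shows "(\<Sum>S'\<in>Pow {..<m}. y S' * wt T S' u w) \<le> 2 * Yv y"
proof -
  have "(\<Sum>S'\<in>Pow {..<m}. y S' * wt T S' u w) \<le> (\<Sum>S'\<in>Pow {..<m}. y S' * 2)"
    by (rule sum_mono) (use assms wt_le2 in \<open>simp add: mult_left_mono\<close>)
  also have "(\<Sum>S'\<in>Pow {..<m}. y S' * 2) = 2 * Yv y" unfolding Yv_def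
    by (simp add: sum_distrib_left mult.commute)
  finally show ?thesis .
qed

lemma gd_bound:
  assumes y0: "\<forall>S. 0 \<le> y S"
    and D: "\<forall>u\<in>T. \<forall>w\<in>T. d (pos u) (pos w) \<le> c0 * (\<Sum>S'\<in>Pow {..<m}. y S' * wt T S' u w)"
    and G: "G \<subseteq> T" "card G = k"
  shows "group_dist dH pos G \<le> 2 * c0 * real k * Yv y"
proof -
  have fG: "finite G" using G(2) k2 card.infinite by fastforce
  have "G \<noteq> {}" using G(2) k2 by auto
  then obtain c where c: "c \<in> G" by blast
  have "group_dist dH pos G \<le> sum_list (map (d (pos c)) (map pos (sorted_list_of_set G)))"
    unfolding group_dist_def by (rule dH_star) (simp add: G(2))
  also have "\<dots> = (\<Sum>v\<in>G. d (pos c) (pos v))"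
  proof -
    have "sum_list (map (d (pos c)) (map pos (sorted_list_of_set G))) = sum_list (map (\<lambda>v. d (pos c) (pos v)) (sorted_list_of_set G))"
      by (simp add: comp_def)
    also have "\<dots> = (\<Sum>v\<in>G. d (pos c) (pos v))"
      using fG by (simp add: sum_list_distinct_conv_sum_set)
    finally show ?thesis .
  qed
  also have "\<dots> \<le> (\<Sum>v\<in>G. 2 * c0 * Yv y)"
  proof (rule sum_mono)
    fix v assume "v \<in> G"
    then have "d (pos c) (pos v) \<le> c0 * (\<Sum>S'\<in>Pow {..<m}. y S' * wt T S' c v)"
      using D c G(1) by blast
    also have "\<dots> \<le> c0 * (2 * Yv y)"
      using sum_wt_le[OF y0] c0_pos by (simp add: mult_left_mono)
    finally show "d (pos c) (pos v) \<le> 2 * c0 * Yv y" by simp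
  qed
  also have "\<dots> = 2 * c0 * real k * Yv y" using G(2) by simp
  finally show ?thesis .
qed

end

context gd begin

lemma y_nonzero_ne: "gdinv t A M y \<Longrightarrow> y S \<noteq> 0 \<Longrightarrow> S \<noteq> {}"
  using I7 by fastforce

lemma merge_cross:
  assumes iv: "gdinv t A M y" and su: "Su \<in> A" and sw: "Sw \<in> A" and x: "x \<in> Su" and z: "z \<in> Sw"
    and ne: "Su \<noteq> Sw" and tight: "dual_sum m y x z = thr x z"
    and a: "a \<in> Su" and b: "b \<in> Sw"
  shows "d (pos a) (pos b) \<le> c0 * (\<Sum>S'\<in>Pow {..<m}. y S' * wt (Su \<union> Sw) S' a b)"
proof -
  note I = invD[OF iv]
  have dj: "Su \<inter> Sw = {}" using I(2) su sw ne by blast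
  have d1: "d (pos a) (pos x) \<le> c0 * (\<Sum>S'\<in>Pow {..<m}. y S' * wt Su S' a x)"
    using I(13) su a x by blast
  have d3: "d (pos z) (pos b) \<le> c0 * (\<Sum>S'\<in>Pow {..<m}. y S' * wt Sw S' z b)"
    using I(13) sw z b by blast
  have d2: "d (pos x) (pos z) \<le> c0 * (\<Sum>S'\<in>Pow {..<m}. if (x \<in> S') \<noteq> (z \<in> S') then y S' else 0)"
  proof -
    have "c0 * dual_sum m y x z = d (pos x) (pos z) + \<bar>atime x - atime z\<bar>"
      using tight c0_pos unfolding thr_eq by simp
    then show ?thesis unfolding dual_sum_alt by simp
  qed
  have tri: "d (pos a) (pos b) \<le> d (pos a) (pos x) + d (pos x) (pos z) + d (pos z) (pos b)"
    using d_tri[of "pos a" "pos b" "pos x"] d_tri[of "pos x" "pos b" "pos z"] by linarith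
  have pw: "y S' * wt Su S' a x + (if (x \<in> S') \<noteq> (z \<in> S') then y S' else 0) + y S' * wt Sw S' z b
            \<le> y S' * wt (Su \<union> Sw) S' a b" for S'
  proof (cases "y S' = 0")
    case True then show ?thesis by simp
  next
    case False
    have ne': "S' \<noteq> {}" using y_nonzero_ne[OF iv False] .
    obtain T where T: "T \<in> A" "S' \<subseteq> T" using I(4) False by blast
    have cs: "S' \<subseteq> Su \<or> S' \<subseteq> Sw \<or> (S' \<inter> Su = {} \<and> S' \<inter> Sw = {})"
    proof (cases "T = Su")
      case True then show ?thesis using T by blast
    next
      case F1: False
      show ?thesis
      proof (cases "T = Sw")
        case True then show ?thesis using T by blast
      next
        case False
        then have "T \<inter> Su = {}" "T \<inter> Sw = {}" using I(2) T(1) su sw F1 by blast+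
        then show ?thesis using T(2) by blast
      qed
    qed
    have w: "wt Su S' a x + (if (x \<in> S') \<noteq> (z \<in> S') then 1 else 0) + wt Sw S' z b \<le> wt (Su \<union> Sw) S' a b"
      by (rule wt_merge[OF dj a x z b ne' cs])
    have "y S' * (wt Su S' a x + (if (x \<in> S') \<noteq> (z \<in> S') then 1 else 0) + wt Sw S' z b) \<le> y S' * wt (Su \<union> Sw) S' a b"
      using w I(5) by (simp add: mult_left_mono)
    moreover have "y S' * (if (x \<in> S') \<noteq> (z \<in> S') then 1 else 0) = (if (x \<in> S') \<noteq> (z \<in> S') then y S' else 0)"
      by simp
    ultimately show ?thesis by (simp only: distrib_left)
  qed
  have "(\<Sum>S'\<in>Pow {..<m}. y S' * wt Su S' a x) + (\<Sum>S'\<in>Pow {..<m}. if (x \<in> S') \<noteq> (z \<in> S') then y S' else 0)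
        + (\<Sum>S'\<in>Pow {..<m}. y S' * wt Sw S' z b) \<le> (\<Sum>S'\<in>Pow {..<m}. y S' * wt (Su \<union> Sw) S' a b)"
    unfolding sum.distrib[symmetric] by (rule sum_mono) (rule pw)
  then have "c0 * ((\<Sum>S'\<in>Pow {..<m}. y S' * wt Su S' a x) + (\<Sum>S'\<in>Pow {..<m}. if (x \<in> S') \<noteq> (z \<in> S') then y S' else 0)
        + (\<Sum>S'\<in>Pow {..<m}. y S' * wt Sw S' z b)) \<le> c0 * (\<Sum>S'\<in>Pow {..<m}. y S' * wt (Su \<union> Sw) S' a b)"
    using c0_pos by (simp add: mult_left_mono)
  then show ?thesis using tri d1 d2 d3 by (simp add: distrib_left)
qed

end

context gd begin

lemma inv_merge:
  assumes iv: "gdinv t A M y" and su: "Su \<in> A" and sw: "Sw \<in> A" and x: "x \<in> Su" and z: "z \<in> Sw"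
    and ne: "Su \<noteq> Sw" and tight: "dual_sum m y x z = thr x z"
    and S: "S = Su \<union> Sw"
    and Gs1: "\<forall>G\<in>Gs. G \<subseteq> free M S \<and> card G = k"
    and Gs2: "\<forall>G\<in>Gs. \<forall>G'\<in>Gs. G \<noteq> G' \<longrightarrow> G \<inter> G' = {}"
    and Gs3: "card (free M S - \<Union>Gs) < k"
  shows "gdinv t (insert S (A - {Su, Sw})) (M \<union> (\<lambda>G. (G, t)) ` Gs) y"
proof -
  note I = invD[OF iv]
  define A' where "A' = insert S (A - {Su, Sw})"
  define N where "N = (\<lambda>G. (G, t)) ` Gs"
  define M' where "M' = M \<union> N"
  have dj: "Su \<inter> Sw = {}" using I(2) su sw ne by blast
  have Ssub: "S \<subseteq> {..<m}" "S \<noteq> {}" using I(1) su sw S by blast+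
  have finS: "finite S" using Ssub(1) by (rule finite_subset) simp
  have UA: "\<Union>A' = \<Union>A" unfolding A'_def S using su sw by blast
  have ms: "matched M \<subseteq> \<Union>A" using matched_sub[OF iv] .
  have "\<Union>A \<subseteq> {..<m}" using I(1) by blast
  then have finUA: "finite (\<Union>A)" by (rule finite_subset) simp
  have GsS: "\<forall>G\<in>Gs. G \<subseteq> S - matched M" using Gs1 unfolding free_def by blast
  have Gsk: "\<forall>G\<in>Gs. card G = k" using Gs1 by blast
  have Gsne: "\<forall>G\<in>Gs. G \<noteq> {}" using Gsk k2 by fastforce
  have finGs: "finite Gs"
  proof -
    have "Gs \<subseteq> Pow S" using GsS by blast
    moreover have "finite (Pow S)" using finS by simp
    ultimately show ?thesis by (rule finite_subset)
  qed
  have finG: "\<forall>G\<in>Gs. finite G"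
  proof
    fix G assume "G \<in> Gs"
    then have "G \<subseteq> S" using GsS by blast
    then show "finite G" using finS by (rule finite_subset)
  qed
  have fstN: "fst ` N = Gs" unfolding N_def by (simp add: image_image)
  have mM': "matched M' = matched M \<union> \<Union>Gs"
    unfolding M'_def matched_def using fstN by (simp add: image_Un)
  have injN: "inj_on (\<lambda>G. (G, t)) Gs" by (rule inj_onI) simp
  have MN: "M \<inter> N = {}"
  proof (rule ccontr)
    assume "M \<inter> N \<noteq> {}"
    then obtain G where G: "G \<in> Gs" "(G, t) \<in> M" unfolding N_def by blast
    then have "G \<in> fst ` M" by (simp add: rev_image_eqI)
    then have "G \<subseteq> matched M" unfolding matched_def by blast
    moreover have "G \<subseteq> S - matched M" using GsS G(1) by blast
    ultimately have "G = {}" by blast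
    then show False using Gsne G(1) by blast
  qed
  have finN: "finite N" unfolding N_def using finGs by simp
  have "card M' = card M + card N" unfolding M'_def by (rule card_Un_disjoint[OF I(9) finN MN])
  moreover have "card N = card Gs" unfolding N_def by (rule card_image[OF injN])
  ultimately have cardM': "card M' = card M + card Gs" by simp
  have UGs: "\<Union>Gs \<subseteq> S" using GsS by blast
  have SnotA: "\<forall>T\<in>A - {Su, Sw}. T \<inter> S = {}"
  proof
    fix T assume T: "T \<in> A - {Su, Sw}"
    then have "T \<inter> Su = {}" "T \<inter> Sw = {}" using I(2) su sw by blast+
    then show "T \<inter> S = {}" using S by blast
  qed
  have D13: "\<forall>T\<in>A'. \<forall>u\<in>T. \<forall>w\<in>T. d (pos u) (pos w) \<le> c0 * (\<Sum>S'\<in>Pow {..<m}. y S' * wt T S' u w)"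
  proof (intro ballI)
    fix T u w assume T: "T \<in> A'" and u: "u \<in> T" and w: "w \<in> T"
    show "d (pos u) (pos w) \<le> c0 * (\<Sum>S'\<in>Pow {..<m}. y S' * wt T S' u w)"
    proof (cases "T = S")
      case False
      then have "T \<in> A" using T unfolding A'_def by blast
      then show ?thesis using I(13) u w by blast
    next
      case True
      have mono: "d (pos u) (pos w) \<le> c0 * (\<Sum>S'\<in>Pow {..<m}. y S' * wt S S' u w)"
        if R: "R \<in> A" "R \<subseteq> S" "u \<in> R" "w \<in> R" for R
      proof -
        have "d (pos u) (pos w) \<le> c0 * (\<Sum>S'\<in>Pow {..<m}. y S' * wt R S' u w)" using I(13) R by blast
        also have "\<dots> \<le> c0 * (\<Sum>S'\<in>Pow {..<m}. y S' * wt S S' u w)"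
        proof -
          have "(\<Sum>S'\<in>Pow {..<m}. y S' * wt R S' u w) \<le> (\<Sum>S'\<in>Pow {..<m}. y S' * wt S S' u w)"
          proof (rule sum_mono)
            fix S' have "wt R S' u w \<le> wt S S' u w" using R(2) unfolding wt_def by auto
            then show "y S' * wt R S' u w \<le> y S' * wt S S' u w" using I(5) by (simp add: mult_left_mono)
          qed
          then show ?thesis using c0_pos by (simp add: mult_left_mono)
        qed
        finally show ?thesis .
      qed
      have uS: "u \<in> Su \<union> Sw" "w \<in> Su \<union> Sw" using u w True S by auto
      consider "u \<in> Su" "w \<in> Su" | "u \<in> Sw" "w \<in> Sw" | "u \<in> Su" "w \<in> Sw" | "u \<in> Sw" "w \<in> Su"
        using uS by blast
      then show ?thesis
      proof cases
        case 1 then show ?thesis using mono[OF su] True S by blast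
      next
        case 2 then show ?thesis using mono[OF sw] True S by blast
      next
        case 3 then show ?thesis using merge_cross[OF iv su sw x z ne tight] True S by blast
      next
        case 4
        have "d (pos w) (pos u) \<le> c0 * (\<Sum>S'\<in>Pow {..<m}. y S' * wt (Su \<union> Sw) S' w u)"
          using merge_cross[OF iv su sw x z ne tight] 4 by blast
        moreover have "(\<Sum>S'\<in>Pow {..<m}. y S' * wt (Su \<union> Sw) S' w u) = (\<Sum>S'\<in>Pow {..<m}. y S' * wt (Su \<union> Sw) S' u w)"
          by (rule sum.cong) (simp_all add: wt_sym[of _ _ w u])
        moreover have "d (pos w) (pos u) = d (pos u) (pos w)" by (rule d_sym)
        ultimately show ?thesis using True S by simp
      qed
    qed
  qed
  show ?thesis
  unfolding A'_def[symmetric] N_def[symmetric] M'_def[symmetric]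
  proof (rule invI)
    show "\<forall>T\<in>A'. T \<noteq> {} \<and> T \<subseteq> {..<m}" using I(1) Ssub unfolding A'_def by blast
    show "\<forall>T\<in>A'. \<forall>T'\<in>A'. T \<noteq> T' \<longrightarrow> T \<inter> T' = {}"
    proof (intro ballI impI)
      fix T T' assume T: "T \<in> A'" and T': "T' \<in> A'" and TT: "T \<noteq> T'"
      show "T \<inter> T' = {}"
      proof (cases "T = S")
        case True
        then have "T' \<in> A - {Su, Sw}" using T' TT unfolding A'_def by blast
        then have "T' \<inter> S = {}" using SnotA by blast
        then show ?thesis using True by blast
      next
        case F: False
        then have TA: "T \<in> A - {Su, Sw}" using T unfolding A'_def by blast
        show ?thesis
        proof (cases "T' = S")
          case True
          then show ?thesis using SnotA TA by blast
        next
          case False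
          then have "T' \<in> A" using T' unfolding A'_def by blast
          then show ?thesis using I(2) TA TT by blast
        qed
      qed
    qed
    show "\<forall>v\<in>\<Union>A'. atime v \<le> t" using I(3) UA by simp
    show "\<forall>S'. y S' \<noteq> 0 \<longrightarrow> (\<exists>T\<in>A'. S' \<subseteq> T)"
    proof (intro allI impI)
      fix S' assume "y S' \<noteq> 0"
      then obtain T where "T \<in> A" "S' \<subseteq> T" using I(4) by blast
      then show "\<exists>T\<in>A'. S' \<subseteq> T"
      proof (cases "T \<in> {Su, Sw}")
        case True
        then have "S' \<subseteq> S" using \<open>S' \<subseteq> T\<close> S by blast
        then show ?thesis unfolding A'_def by blast
      next
        case False
        then show ?thesis using \<open>T \<in> A\<close> \<open>S' \<subseteq> T\<close> unfolding A'_def by blast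
      qed
    qed
    show "\<forall>S. 0 \<le> y S" by (rule I(5))
    show "\<forall>S. y S \<noteq> 0 \<longrightarrow> \<not> k dvd card S" by (rule I(6))
    show "\<forall>u\<in>\<Union>A'. (\<Sum>S\<in>Pow {..<m}. if u \<in> S then y S else 0) \<le> r * (t - atime u)"
      using I(7) UA by simp
    show "\<forall>u<m. \<forall>w<m. u \<noteq> w \<longrightarrow> dual_sum m y u w \<le> thr u w" by (rule I(8))
    show "finite M'" unfolding M'_def using I(9) finN by simp
    show "\<forall>p\<in>M'. card (fst p) = k \<and> (\<exists>T\<in>A'. fst p \<subseteq> T)"
    proof
      fix p assume "p \<in> M'"
      then consider "p \<in> M" | "p \<in> N" unfolding M'_def by blast
      then show "card (fst p) = k \<and> (\<exists>T\<in>A'. fst p \<subseteq> T)"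
      proof cases
        case 1
        then obtain T where T: "T \<in> A" "fst p \<subseteq> T" "card (fst p) = k" using I(10) by blast
        show ?thesis
        proof (cases "T \<in> {Su, Sw}")
          case True
          then have "fst p \<subseteq> S" using T(2) S by blast
          then show ?thesis using T(3) unfolding A'_def by blast
        next
          case False
          then show ?thesis using T unfolding A'_def by blast
        qed
      next
        case 2
        then obtain G where G: "G \<in> Gs" "p = (G, t)" unfolding N_def by blast
        have "card G = k" using Gsk G(1) by blast
        moreover have "G \<subseteq> S" using GsS G(1) by blast
        moreover have "S \<in> A'" unfolding A'_def by blast
        ultimately show ?thesis using G(2) by auto
      qed
    qed
    show "\<forall>p\<in>M'. \<forall>q\<in>M'. p \<noteq> q \<longrightarrow> fst p \<inter> fst q = {}"
    proof (intro ballI impI)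
      fix p q assume p: "p \<in> M'" and q: "q \<in> M'" and pq: "p \<noteq> q"
      have inM: "fst p' \<subseteq> matched M" if "p' \<in> M" for p'
        using that unfolding matched_def by blast
      have inN: "fst p' \<in> Gs \<and> fst p' \<subseteq> S - matched M \<and> p' = (fst p', t)" if "p' \<in> N" for p'
        using that GsS unfolding N_def by auto
      show "fst p \<inter> fst q = {}"
      proof (cases "p \<in> M")
        case pM: True
        show ?thesis
        proof (cases "q \<in> M")
          case True then show ?thesis using I(11) pM pq by blast
        next
          case False
          then have "q \<in> N" using q unfolding M'_def by blast
          then have "fst q \<subseteq> S - matched M" using inN by blast
          moreover have "fst p \<subseteq> matched M" using inM pM by blast
          ultimately show ?thesis by blast
        qed
      next
        case pM: False
        then have pN: "p \<in> N" using p unfolding M'_def by blast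
        show ?thesis
        proof (cases "q \<in> M")
          case True
          have "fst p \<subseteq> S - matched M" using inN pN by blast
          moreover have "fst q \<subseteq> matched M" using inM True by blast
          ultimately show ?thesis by blast
        next
          case False
          then have qN: "q \<in> N" using q unfolding M'_def by blast
          have "fst p \<noteq> fst q" using inN[OF pN] inN[OF qN] pq by metis
          then show ?thesis using Gs2 inN[OF pN] inN[OF qN] by blast
        qed
      qed
    qed
    show "\<forall>T\<in>A'. card (free M' T) < k"
    proof
      fix T assume T: "T \<in> A'"
      show "card (free M' T) < k"
      proof (cases "T = S")
        case True
        have "free M' S = free M S - \<Union>Gs" unfolding free_def mM' by blast
        then show ?thesis using True Gs3 by simp
      next
        case False
        then have "T \<in> A - {Su, Sw}" using T unfolding A'_def by blast
        then have "free M' T = free M T" unfolding free_def mM' using SnotA UGs by blast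
        then show ?thesis using I(12) \<open>T \<in> A - {Su, Sw}\<close> by simp
      qed
    qed
    show "\<forall>T\<in>A'. \<forall>u\<in>T. \<forall>w\<in>T. d (pos u) (pos w) \<le> c0 * (\<Sum>S'\<in>Pow {..<m}. y S' * wt T S' u w)"
      by (rule D13)
    show "(\<Sum>p\<in>M'. \<Sum>v\<in>fst p. snd p - atime v) + (\<Sum>v\<in>\<Union>A' - matched M'. t - atime v) \<le> real (k - 1) * c0 * Yv y"
    proof -
      have s1: "(\<Sum>p\<in>M'. \<Sum>v\<in>fst p. snd p - atime v) = (\<Sum>p\<in>M. \<Sum>v\<in>fst p. snd p - atime v) + (\<Sum>G\<in>Gs. \<Sum>v\<in>G. t - atime v)"
      proof -
        have "(\<Sum>p\<in>M'. \<Sum>v\<in>fst p. snd p - atime v) = (\<Sum>p\<in>M. \<Sum>v\<in>fst p. snd p - atime v) + (\<Sum>p\<in>N. \<Sum>v\<in>fst p. snd p - atime v)"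
          unfolding M'_def by (rule sum.union_disjoint[OF I(9) finN MN])
        moreover have "(\<Sum>p\<in>N. \<Sum>v\<in>fst p. snd p - atime v) = (\<Sum>G\<in>Gs. \<Sum>v\<in>G. t - atime v)"
          unfolding N_def by (simp add: sum.reindex[OF injN])
        ultimately show ?thesis by simp
      qed
      have s2: "(\<Sum>v\<in>\<Union>A - matched M. t - atime v) = (\<Sum>v\<in>\<Union>A' - matched M'. t - atime v) + (\<Sum>G\<in>Gs. \<Sum>v\<in>G. t - atime v)"
      proof -
        have sub: "\<Union>Gs \<subseteq> \<Union>A - matched M" using GsS S su sw by blast
        have e: "\<Union>A' - matched M' = (\<Union>A - matched M) - \<Union>Gs" unfolding UA mM' by blast
        have "(\<Sum>v\<in>\<Union>A - matched M. t - atime v) = (\<Sum>v\<in>(\<Union>A - matched M) - \<Union>Gs. t - atime v) + (\<Sum>v\<in>\<Union>Gs. t - atime v)"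
          using sum.subset_diff[OF sub] finUA by simp
        moreover have "(\<Sum>v\<in>\<Union>Gs. t - atime v) = (\<Sum>G\<in>Gs. \<Sum>v\<in>G. t - atime v)"
          using sum.Union_disjoint[OF finG Gs2, of "\<lambda>v. t - atime v"] by (simp add: comp_def)
        ultimately show ?thesis unfolding e by simp
      qed
      show ?thesis using I(14) s1 s2 by linarith
    qed
    show "(\<Sum>p\<in>M'. group_dist dH pos (fst p)) \<le> 2 * c0 * real k * real (card M') * Yv y"
    proof -
      have "(\<Sum>p\<in>M'. group_dist dH pos (fst p)) = (\<Sum>p\<in>M. group_dist dH pos (fst p)) + (\<Sum>p\<in>N. group_dist dH pos (fst p))"
        unfolding M'_def by (rule sum.union_disjoint[OF I(9) finN MN])
      also have "(\<Sum>p\<in>N. group_dist dH pos (fst p)) = (\<Sum>G\<in>Gs. group_dist dH pos G)"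
        unfolding N_def by (simp add: sum.reindex[OF injN])
      also have "(\<Sum>G\<in>Gs. group_dist dH pos G) \<le> (\<Sum>G\<in>Gs. 2 * c0 * real k * Yv y)"
      proof (rule sum_mono)
        fix G assume G: "G \<in> Gs"
        have SA': "S \<in> A'" unfolding A'_def by blast
        show "group_dist dH pos G \<le> 2 * c0 * real k * Yv y"
        proof (rule gd_bound[OF I(5)])
          show "\<forall>u\<in>S. \<forall>w\<in>S. d (pos u) (pos w) \<le> c0 * (\<Sum>S'\<in>Pow {..<m}. y S' * wt S S' u w)"
            using D13 SA' by blast
          show "G \<subseteq> S" using GsS G by blast
          show "card G = k" using Gsk G by blast
        qed
      qed
      also have "(\<Sum>G\<in>Gs. 2 * c0 * real k * Yv y) = 2 * c0 * real k * real (card Gs) * Yv y" by simp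
      finally have "(\<Sum>p\<in>M'. group_dist dH pos (fst p)) \<le> 2 * c0 * real k * real (card M) * Yv y + 2 * c0 * real k * real (card Gs) * Yv y"
        using I(15) by linarith
      then show ?thesis unfolding cardM' by (simp add: algebra_simps)
    qed
  qed
qed

end

context gd begin

lemma dual_sum_sym: "dual_sum m y u w = dual_sum m y w u"
  unfolding dual_sum_alt by (rule sum.cong) auto

lemma thr_sym: "thr u w = thr w u"
  unfolding thr_eq using d_sym by (simp add: abs_minus_commute)

lemma notdvd:
  assumes iv: "gdinv t A M y" and S: "S \<in> A" and fr: "free M S \<noteq> {}"
  shows "\<not> k dvd card S"
proof
  assume kd: "k dvd card S"
  note I = invD[OF iv]
  have finS: "finite S" using I(1) S finite_subset[of S "{..<m}"] by blast
  define Gm where "Gm = {G \<in> fst ` M. G \<subseteq> S}"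
  have sub: "S \<inter> matched M = \<Union>Gm"
  proof
    show "\<Union>Gm \<subseteq> S \<inter> matched M" unfolding Gm_def matched_def by blast
    show "S \<inter> matched M \<subseteq> \<Union>Gm"
    proof
      fix v assume v: "v \<in> S \<inter> matched M"
      then obtain p where p: "p \<in> M" "v \<in> fst p" unfolding matched_def by blast
      obtain T where T: "T \<in> A" "fst p \<subseteq> T" using I(10) p(1) by blast
      have "v \<in> T" using p(2) T(2) by blast
      then have "S = T" using I(2) S T(1) v by blast
      then have "fst p \<in> Gm" unfolding Gm_def using p(1) T(2) by blast
      then show "v \<in> \<Union>Gm" using p(2) by blast
    qed
  qed
  have finGm: "finite Gm"
  proof -
    have "Gm \<subseteq> Pow S" unfolding Gm_def by blast
    moreover have "finite (Pow S)" using finS by simp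
    ultimately show ?thesis by (rule finite_subset)
  qed
  have cGm: "\<forall>G\<in>Gm. card G = k" unfolding Gm_def using I(10) by auto
  have fGm: "\<forall>G\<in>Gm. finite G"
  proof
    fix G assume "G \<in> Gm"
    then have "G \<subseteq> S" unfolding Gm_def by blast
    then show "finite G" using finS by (rule finite_subset)
  qed
  have djGm: "pairwise disjnt Gm"
  proof (rule pairwiseI)
    fix G G' assume G: "G \<in> Gm" and G': "G' \<in> Gm" and ne: "G \<noteq> G'"
    obtain p where p: "p \<in> M" "G = fst p" using G unfolding Gm_def by blast
    obtain q where q: "q \<in> M" "G' = fst q" using G' unfolding Gm_def by blast
    have "p \<noteq> q" using p q ne by blast
    then have "fst p \<inter> fst q = {}" using I(11) p(1) q(1) by blast
    then show "disjnt G G'" using p q by (simp add: disjnt_def)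
  qed
  have c1: "card (\<Union>Gm) = k * card Gm"
  proof -
    have "card (\<Union>Gm) = sum card Gm" by (rule card_Union_disjoint[OF djGm]) (use fGm in blast)
    also have "\<dots> = sum (\<lambda>G. k) Gm" by (rule sum.cong) (use cGm in auto)
    finally show ?thesis by simp
  qed
  have "S = (S \<inter> matched M) \<union> free M S" unfolding free_def by blast
  moreover have "(S \<inter> matched M) \<inter> free M S = {}" unfolding free_def by blast
  ultimately have "card S = card (S \<inter> matched M) + card (free M S)"
    using finS card_Un_disjoint[of "S \<inter> matched M" "free M S"]
    by (metis finite_Int finite_Diff free_def)
  then have cS: "card S = k * card Gm + card (free M S)" using sub c1 by simp
  have f0: "0 < card (free M S)" using fr finS unfolding free_def by (simp add: card_gt_0_iff)
  have f1: "card (free M S) < k" using I(12) S by blast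
  from kd cS have "k dvd card (free M S)" by (simp add: dvd_add_right_iff)
  then show False using f0 f1 by (meson nat_dvd_not_less)
qed

end

context gd begin

lemma inv_advance:
  assumes iv: "gdinv t A M y" and tt: "t < t'"
    and arr: "\<forall>v<m. atime v < t' \<longrightarrow> v \<in> \<Union>A"
    and y': "y' = (\<lambda>S. if S \<in> A \<and> free M S \<noteq> {} then y S + r * (t' - t) else y S)"
    and cr: "\<forall>u w. cross A u w \<longrightarrow> dual_sum m y u w < thr u w \<and> dual_sum m y' u w \<le> thr u w"
  shows "gdinv t' A M y'"
proof -
  note I = invD[OF iv]
  define g where "g = r * (t' - t)"
  define Gr where "Gr = {S \<in> A. free M S \<noteq> {}}"
  have g0: "0 < g" unfolding g_def using r_pos tt by simp
  have yd: "y' S = y S + (if S \<in> Gr then g else 0)" for S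
    unfolding y' Gr_def g_def by simp
  have yge: "y S \<le> y' S" for S using yd[of S] g0 by simp
  have AP: "A \<subseteq> Pow {..<m}" using I(1) by blast
  have finA: "finite A" using AP by (rule finite_subset) simp
  have GrA: "Gr \<subseteq> A" unfolding Gr_def by blast
  have finGr: "finite Gr" using finA GrA finite_subset by blast
  have UAsub: "\<Union>A \<subseteq> {..<m}" using I(1) by blast
  have finUA: "finite (\<Union>A)" using UAsub by (rule finite_subset) simp
  have sumind: "(\<Sum>S\<in>Pow {..<m}. if S \<in> X then g else 0) = g * real (card X)" if X: "X \<subseteq> Pow {..<m}" for X
  proof -
    have "(\<Sum>S\<in>Pow {..<m}. if S \<in> X then g else 0) = (\<Sum>S\<in>{S \<in> Pow {..<m}. S \<in> X}. g)"
      by (rule sum.inter_filter[symmetric]) simp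
    also have "{S \<in> Pow {..<m}. S \<in> X} = X" using X by blast
    finally show ?thesis by simp
  qed
  have Yd: "Yv y' = Yv y + g * real (card Gr)"
  proof -
    have "Yv y' = (\<Sum>S\<in>Pow {..<m}. y S + (if S \<in> Gr then g else 0))" unfolding Yv_def using yd by simp
    also have "\<dots> = Yv y + (\<Sum>S\<in>Pow {..<m}. if S \<in> Gr then g else 0)" unfolding Yv_def by (simp add: sum.distrib)
    also have "(\<Sum>S\<in>Pow {..<m}. if S \<in> Gr then g else 0) = g * real (card Gr)"
      using sumind GrA AP by blast
    finally show ?thesis .
  qed
  have Yle: "Yv y \<le> Yv y'" using Yd g0 by simp
  have c0r: "c0 * r = 1" unfolding r_def using c0_pos by simp
  have N5: "\<forall>S. y' S \<noteq> 0 \<longrightarrow> (\<exists>T\<in>A. S \<subseteq> T)"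
  proof (intro allI impI)
    fix S assume "y' S \<noteq> 0"
    then have "y S \<noteq> 0 \<or> S \<in> Gr" using yd[of S] by (auto split: if_splits)
    then show "\<exists>T\<in>A. S \<subseteq> T" using I(4) GrA by blast
  qed
  have N6: "\<forall>S. 0 \<le> y' S" using I(5) yge order_trans by blast
  have N7: "\<forall>S. y' S \<noteq> 0 \<longrightarrow> \<not> k dvd card S"
  proof (intro allI impI)
    fix S assume "y' S \<noteq> 0"
    then have "y S \<noteq> 0 \<or> S \<in> Gr" using yd[of S] by (auto split: if_splits)
    then show "\<not> k dvd card S"
    proof
      assume "y S \<noteq> 0" then show ?thesis using I(6) by blast
    next
      assume "S \<in> Gr" then show ?thesis using notdvd[OF iv] unfolding Gr_def by blast
    qed
  qed
  have N8: "\<forall>u\<in>\<Union>A. (\<Sum>S\<in>Pow {..<m}. if u \<in> S then y' S else 0) \<le> r * (t' - atime u)"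
  proof
    fix u assume u: "u \<in> \<Union>A"
    then obtain T where T: "T \<in> A" "u \<in> T" by blast
    have X: "{S \<in> Gr. u \<in> S} \<subseteq> Pow {..<m}" using GrA AP by blast
    have "(\<Sum>S\<in>Pow {..<m}. if u \<in> S then y' S else 0)
          = (\<Sum>S\<in>Pow {..<m}. (if u \<in> S then y S else 0) + (if S \<in> {S \<in> Gr. u \<in> S} then g else 0))"
      by (rule sum.cong) (auto simp: yd)
    also have "\<dots> = (\<Sum>S\<in>Pow {..<m}. if u \<in> S then y S else 0) + g * real (card {S \<in> Gr. u \<in> S})"
      by (simp only: sum.distrib sumind[OF X])
    also have "\<dots> \<le> r * (t - atime u) + g * 1"
    proof -
      have "{S \<in> Gr. u \<in> S} \<subseteq> {T}" using I(2) T GrA by blast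
      then have "card {S \<in> Gr. u \<in> S} \<le> card {T}" by (rule card_mono[rotated]) simp
      then have "real (card {S \<in> Gr. u \<in> S}) \<le> 1" by simp
      then have "g * real (card {S \<in> Gr. u \<in> S}) \<le> g * 1" using g0 by (simp add: mult_left_mono)
      moreover have "(\<Sum>S\<in>Pow {..<m}. if u \<in> S then y S else 0) \<le> r * (t - atime u)" using I(7) u by blast
      ultimately show ?thesis by linarith
    qed
    also have "\<dots> = r * (t' - atime u)" unfolding g_def by (simp add: algebra_simps)
    finally show "(\<Sum>S\<in>Pow {..<m}. if u \<in> S then y' S else 0) \<le> r * (t' - atime u)" .
  qed
  have unarr: "dual_sum m y' a b \<le> thr a b" if a: "a \<in> \<Union>A" and b: "b < m" "b \<notin> \<Union>A" for a b
  proof -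
    have "dual_sum m y' a b \<le> (\<Sum>S\<in>Pow {..<m}. if a \<in> S then y' S else 0)"
      unfolding dual_sum_alt
    proof (rule sum_mono)
      fix S assume "S \<in> Pow {..<m}"
      show "(if (a \<in> S) \<noteq> (b \<in> S) then y' S else 0) \<le> (if a \<in> S then y' S else 0)"
      proof (cases "y' S = 0")
        case True then show ?thesis by simp
      next
        case False
        then obtain T where "T \<in> A" "S \<subseteq> T" using N5 by blast
        then have "b \<notin> S" using b(2) by blast
        then show ?thesis by simp
      qed
    qed
    also have "\<dots> \<le> r * (t' - atime a)" using N8 a by blast
    also have "\<dots> \<le> r * (atime b - atime a)"
    proof -
      have "\<not> atime b < t'" using arr b by blast
      then show ?thesis using r_pos by (simp add: mult_left_mono)
    qed
    also have "\<dots> \<le> thr a b"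
    proof -
      have "r * (atime b - atime a) \<le> r * \<bar>atime a - atime b\<bar>" using r_pos by (simp add: mult_left_mono)
      also have "\<dots> = \<bar>atime a - atime b\<bar> / c0" unfolding r_def by simp
      also have "\<dots> \<le> thr a b" unfolding thr_eq using d_nonneg c0_pos by (simp add: divide_right_mono)
      finally show ?thesis .
    qed
    finally show ?thesis .
  qed
  have N9: "\<forall>u<m. \<forall>w<m. u \<noteq> w \<longrightarrow> dual_sum m y' u w \<le> thr u w"
  proof (intro allI impI)
    fix u w assume u: "u < m" and w: "w < m" and uw: "u \<noteq> w"
    show "dual_sum m y' u w \<le> thr u w"
    proof (cases "cross A u w")
      case True then show ?thesis using cr by blast
    next
      case nc: False
      consider (same) "\<exists>T\<in>A. u \<in> T \<and> w \<in> T" | (ua) "u \<in> \<Union>A" "w \<notin> \<Union>A"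
        | (wa) "w \<in> \<Union>A" "u \<notin> \<Union>A" | (none) "u \<notin> \<Union>A" "w \<notin> \<Union>A"
        using nc uw unfolding cross_def by blast
      then show ?thesis
      proof cases
        case same
        then obtain T where T: "T \<in> A" "u \<in> T" "w \<in> T" by blast
        have "dual_sum m y' u w = dual_sum m y u w"
          unfolding dual_sum_alt
        proof (rule sum.cong)
          fix S assume "S \<in> Pow {..<m}"
          show "(if (u \<in> S) \<noteq> (w \<in> S) then y' S else 0) = (if (u \<in> S) \<noteq> (w \<in> S) then y S else 0)"
          proof (cases "(u \<in> S) \<noteq> (w \<in> S) \<and> S \<in> Gr")
            case True
            then have "S \<in> A" "S \<noteq> T" using GrA T by auto
            then have "S \<inter> T = {}" using I(2) T(1) by blast
            then show ?thesis using True T by blast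
          next
            case False then show ?thesis using yd[of S] by auto
          qed
        qed simp
        then show ?thesis using I(8) u w uw by simp
      next
        case ua then show ?thesis using unarr w by blast
      next
        case wa
        then have "dual_sum m y' w u \<le> thr w u" using unarr u by blast
        then show ?thesis using dual_sum_sym thr_sym by metis
      next
        case none
        have "dual_sum m y' u w = 0"
          unfolding dual_sum_alt
        proof (rule sum.neutral, rule ballI)
          fix S assume "S \<in> Pow {..<m}"
          show "(if (u \<in> S) \<noteq> (w \<in> S) then y' S else 0) = 0"
          proof (cases "y' S = 0")
            case False
            then obtain T where "T \<in> A" "S \<subseteq> T" using N5 by blast
            then have "u \<notin> S" "w \<notin> S" using none by blast+
            then show ?thesis by simp
          qed simp
        qed
        then show ?thesis using thr_nonneg by simp
      qed
    qed
  qed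
  have cardF: "card (\<Union>A - matched M) \<le> (k - 1) * card Gr"
  proof -
    have "\<Union>A - matched M = (\<Union>S\<in>Gr. free M S)" unfolding Gr_def free_def by blast
    then have "card (\<Union>A - matched M) \<le> (\<Sum>S\<in>Gr. card (free M S))"
      using card_UN_le[OF finGr, of "free M"] by simp
    also have "\<dots> \<le> (\<Sum>S\<in>Gr. k - 1)"
    proof (rule sum_mono)
      fix S assume "S \<in> Gr"
      then show "card (free M S) \<le> k - 1" using I(12) GrA by fastforce
    qed
    finally show ?thesis by (simp add: mult.commute)
  qed
  show ?thesis
  proof (rule invI)
    show "\<forall>S\<in>A. S \<noteq> {} \<and> S \<subseteq> {..<m}" by (rule I(1))
    show "\<forall>S\<in>A. \<forall>T\<in>A. S \<noteq> T \<longrightarrow> S \<inter> T = {}" by (rule I(2))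
    show "\<forall>v\<in>\<Union>A. atime v \<le> t'" using I(3) tt by force
    show "\<forall>S. y' S \<noteq> 0 \<longrightarrow> (\<exists>T\<in>A. S \<subseteq> T)" by (rule N5)
    show "\<forall>S. 0 \<le> y' S" by (rule N6)
    show "\<forall>S. y' S \<noteq> 0 \<longrightarrow> \<not> k dvd card S" by (rule N7)
    show "\<forall>u\<in>\<Union>A. (\<Sum>S\<in>Pow {..<m}. if u \<in> S then y' S else 0) \<le> r * (t' - atime u)" by (rule N8)
    show "\<forall>u<m. \<forall>w<m. u \<noteq> w \<longrightarrow> dual_sum m y' u w \<le> thr u w" by (rule N9)
    show "finite M" by (rule I(9))
    show "\<forall>p\<in>M. card (fst p) = k \<and> (\<exists>T\<in>A. fst p \<subseteq> T)" by (rule I(10))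
    show "\<forall>p\<in>M. \<forall>q\<in>M. p \<noteq> q \<longrightarrow> fst p \<inter> fst q = {}" by (rule I(11))
    show "\<forall>S\<in>A. card (free M S) < k" by (rule I(12))
    show "\<forall>S\<in>A. \<forall>u\<in>S. \<forall>w\<in>S. d (pos u) (pos w) \<le> c0 * (\<Sum>S'\<in>Pow {..<m}. y' S' * wt S S' u w)"
    proof (intro ballI)
      fix S u w assume S: "S \<in> A" and u: "u \<in> S" and w: "w \<in> S"
      have "d (pos u) (pos w) \<le> c0 * (\<Sum>S'\<in>Pow {..<m}. y S' * wt S S' u w)" using I(13) S u w by blast
      also have "\<dots> \<le> c0 * (\<Sum>S'\<in>Pow {..<m}. y' S' * wt S S' u w)"
      proof -
        have "(\<Sum>S'\<in>Pow {..<m}. y S' * wt S S' u w) \<le> (\<Sum>S'\<in>Pow {..<m}. y' S' * wt S S' u w)"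
          by (rule sum_mono) (simp add: mult_right_mono yge wt_nonneg)
        then show ?thesis using c0_pos by (simp add: mult_left_mono)
      qed
      finally show "d (pos u) (pos w) \<le> c0 * (\<Sum>S'\<in>Pow {..<m}. y' S' * wt S S' u w)" .
    qed
    show "(\<Sum>p\<in>M. \<Sum>v\<in>fst p. snd p - atime v) + (\<Sum>v\<in>\<Union>A - matched M. t' - atime v) \<le> real (k - 1) * c0 * Yv y'"
    proof -
      have "(\<Sum>v\<in>\<Union>A - matched M. t' - atime v) = (\<Sum>v\<in>\<Union>A - matched M. (t - atime v) + (t' - t))"
        by (rule sum.cong) simp_all
      also have "\<dots> = (\<Sum>v\<in>\<Union>A - matched M. t - atime v) + real (card (\<Union>A - matched M)) * (t' - t)"
        by (simp only: sum.distrib sum_constant)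
      finally have e: "(\<Sum>v\<in>\<Union>A - matched M. t' - atime v) = (\<Sum>v\<in>\<Union>A - matched M. t - atime v) + real (card (\<Union>A - matched M)) * (t' - t)" .
      have "real (card (\<Union>A - matched M)) * (t' - t) \<le> real ((k - 1) * card Gr) * (t' - t)"
      proof -
        have "real (card (\<Union>A - matched M)) \<le> real ((k - 1) * card Gr)" using cardF by (simp only: of_nat_le_iff)
        then show ?thesis using tt by (intro mult_right_mono) simp_all
      qed
      also have "\<dots> = real (k - 1) * c0 * (g * real (card Gr))"
      proof -
        have "real (k - 1) * c0 * (g * real (card Gr)) = (c0 * r) * (real (k - 1) * real (card Gr) * (t' - t))"
          unfolding g_def by (simp only: mult_ac)
        then show ?thesis using c0r by (simp only: of_nat_mult mult_1)
      qed
      finally have "real (card (\<Union>A - matched M)) * (t' - t) \<le> real (k - 1) * c0 * (g * real (card Gr))" .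
      then show ?thesis using I(14) e Yd by (simp add: algebra_simps)
    qed
    show "(\<Sum>p\<in>M. group_dist dH pos (fst p)) \<le> 2 * c0 * real k * real (card M) * Yv y'"
    proof -
      have "2 * c0 * real k * real (card M) * Yv y \<le> 2 * c0 * real k * real (card M) * Yv y'"
        using Yle c0_pos by (simp add: mult_left_mono)
      then show ?thesis using I(15) by linarith
    qed
  qed
qed

end

context gd begin

definition ginv :: "config \<Rightarrow> bool" where
  "ginv c = (case c of (t, A, M, y) \<Rightarrow> gdinv t A M y)"

lemma step_inv:
  assumes st: "gd_step k \<gamma> r dH m atime pos c c'" and iv: "ginv c"
  shows "ginv c'"
  using st
proof cases
  case (advance t t' A y' M y)
  then show ?thesis using inv_advance[of t A M y t' y'] iv unfolding ginv_def by simp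
next
  case (arrive v A t M y)
  then show ?thesis using inv_arrive[of t A M y v] iv unfolding ginv_def by simp
next
  case (merge Su A Sw u w y S Gs M t)
  then show ?thesis using inv_merge[of t A M y Su Sw u w S Gs] iv unfolding ginv_def by simp
qed

lemma reach_inv:
  assumes "(gd_step k \<gamma> r dH m atime pos)\<^sup>*\<^sup>* gd_init c"
  shows "ginv c"
  using assms
proof (induction rule: rtranclp_induct)
  case base
  then show ?case using inv_init unfolding ginv_def gd_init_def by simp
next
  case (step c' c'')
  then show ?case using step_inv by blast
qed

end

lemma pkm_fin: assumes "perfect_kmatching k m P" shows "finite P" "\<forall>F\<in>P. finite F \<and> F \<subseteq> {..<m} \<and> card F = k"
proof -
  have "P \<subseteq> Pow {..<m}" using assms unfolding perfect_kmatching_def by blast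
  then show "finite P" by (rule finite_subset) simp
  show "\<forall>F\<in>P. finite F \<and> F \<subseteq> {..<m} \<and> card F = k"
  proof
    fix F assume F: "F \<in> P"
    then have "F \<subseteq> {..<m}" "card F = k" using assms unfolding perfect_kmatching_def by blast+
    moreover have "finite F" using \<open>F \<subseteq> {..<m}\<close> by (rule finite_subset) simp
    ultimately show "finite F \<and> F \<subseteq> {..<m} \<and> card F = k" by blast
  qed
qed

lemma cut_exists:
  assumes P: "perfect_kmatching k m P" and S: "S \<subseteq> {..<m}" and nd: "\<not> k dvd card S"
  shows "\<exists>F\<in>P. F \<inter> S \<noteq> {} \<and> F - S \<noteq> {}"
proof (rule ccontr)
  assume "\<not> (\<exists>F\<in>P. F \<inter> S \<noteq> {} \<and> F - S \<noteq> {})"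
  then have all: "\<forall>F\<in>P. F \<inter> S = {} \<or> F \<subseteq> S" by blast
  note pf = pkm_fin[OF P]
  define Q where "Q = {F \<in> P. F \<subseteq> S}"
  have UP: "\<Union>P = {..<m}" using P unfolding perfect_kmatching_def by blast
  have SQ: "S = \<Union>Q"
  proof
    show "\<Union>Q \<subseteq> S" unfolding Q_def by blast
    show "S \<subseteq> \<Union>Q"
    proof
      fix v assume v: "v \<in> S"
      then have "v \<in> \<Union>P" using S UP by blast
      then obtain F where F: "F \<in> P" "v \<in> F" by blast
      then have "F \<subseteq> S" using all v by blast
      then show "v \<in> \<Union>Q" unfolding Q_def using F by blast
    qed
  qed
  have djQ: "pairwise disjnt Q"
  proof (rule pairwiseI)
    fix F G assume "F \<in> Q" "G \<in> Q" "F \<noteq> G"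
    then have "F \<inter> G = {}" using P unfolding perfect_kmatching_def Q_def by blast
    then show "disjnt F G" by (simp add: disjnt_def)
  qed
  have "card S = sum card Q" unfolding SQ
    by (rule card_Union_disjoint[OF djQ]) (use pf(2) in \<open>simp add: Q_def\<close>)
  also have "\<dots> = sum (\<lambda>F. k) Q" by (rule sum.cong) (use pf(2) in \<open>simp_all add: Q_def\<close>)
  finally have "card S = k * card Q" by simp
  then show False using nd by simp
qed

lemma ind_sum: "finite F \<Longrightarrow> (\<Sum>w\<in>F. if P w then 1 else 0 :: real) = real (card {w \<in> F. P w})"
  by (simp add: sum.If_cases Int_def)

lemma cut_ge:
  assumes fF: "finite F" and cF: "card F = k" and a: "F \<inter> S \<noteq> {}" and b: "F - S \<noteq> {}"
  shows "2 * (real k - 1) \<le> (\<Sum>u\<in>F. \<Sum>w\<in>F. if (u \<in> S) \<noteq> (w \<in> S) then 1 else 0 :: real)"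
proof -
  define \<alpha> where "\<alpha> = card (F \<inter> S)"
  define \<beta> where "\<beta> = card (F - S)"
  have r: "(\<Sum>w\<in>F. if (u \<in> S) \<noteq> (w \<in> S) then 1 else 0 :: real) = (if u \<in> S then real \<beta> else real \<alpha>)" for u
  proof (cases "u \<in> S")
    case True
    have "(\<Sum>w\<in>F. if (u \<in> S) \<noteq> (w \<in> S) then 1 else 0 :: real) = (\<Sum>w\<in>F. if w \<notin> S then 1 else 0)"
      using True by (intro sum.cong) auto
    also have "\<dots> = real (card {w \<in> F. w \<notin> S})" by (rule ind_sum[OF fF])
    also have "{w \<in> F. w \<notin> S} = F - S" by blast
    finally show ?thesis using True unfolding \<beta>_def by simp
  next
    case False
    have "(\<Sum>w\<in>F. if (u \<in> S) \<noteq> (w \<in> S) then 1 else 0 :: real) = (\<Sum>w\<in>F. if w \<in> S then 1 else 0)"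
      using False by (intro sum.cong) auto
    also have "\<dots> = real (card {w \<in> F. w \<in> S})" by (rule ind_sum[OF fF])
    also have "{w \<in> F. w \<in> S} = F \<inter> S" by blast
    finally show ?thesis using False unfolding \<alpha>_def by simp
  qed
  have "(\<Sum>u\<in>F. \<Sum>w\<in>F. if (u \<in> S) \<noteq> (w \<in> S) then 1 else 0 :: real) = (\<Sum>u\<in>F. if u \<in> S then real \<beta> else real \<alpha>)"
    using r by simp
  also have "\<dots> = real \<alpha> * real \<beta> + real \<beta> * real \<alpha>"
    using fF by (simp add: sum.If_cases Int_def \<alpha>_def \<beta>_def Diff_eq)
  finally have e: "(\<Sum>u\<in>F. \<Sum>w\<in>F. if (u \<in> S) \<noteq> (w \<in> S) then 1 else 0 :: real) = 2 * (real \<alpha> * real \<beta>)" by simp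
  have ab: "\<alpha> + \<beta> = k"
  proof -
    have "F = (F \<inter> S) \<union> (F - S)" by blast
    then have "card F = card (F \<inter> S) + card (F - S)"
      using card_Un_disjoint[of "F \<inter> S" "F - S"] fF by (metis Diff_disjoint Int_Diff_disjoint finite_Diff finite_Int inf_commute)
    then show ?thesis using cF unfolding \<alpha>_def \<beta>_def by simp
  qed
  have a1: "1 \<le> \<alpha>" unfolding \<alpha>_def using a fF by (simp add: Suc_le_eq card_gt_0_iff)
  have b1: "1 \<le> \<beta>" unfolding \<beta>_def using b fF by (simp add: Suc_le_eq card_gt_0_iff)
  have "0 \<le> (real \<alpha> - 1) * (real \<beta> - 1)" using a1 b1 by simp
  then have "real \<alpha> + real \<beta> - 1 \<le> real \<alpha> * real \<beta>" by (simp add: algebra_simps)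
  moreover have "real \<alpha> + real \<beta> = real k" using ab by (metis of_nat_add)
  ultimately have "real k - 1 \<le> real \<alpha> * real \<beta>" by (simp only:)
  then have "2 * (real k - 1) \<le> 2 * (real \<alpha> * real \<beta>)" by simp
  then show ?thesis unfolding e .
qed

context gd begin

definition Wt :: "nat set \<Rightarrow> real" where "Wt F = (\<Sum>v\<in>F. Max (atime ` F) - atime v)"

lemma pair_bound:
  assumes fF: "finite F" and cF: "card F = k" and u: "u \<in> F" and w: "w \<in> F" and uw: "u \<noteq> w"
  shows "c0 * thr u w \<le> 2 * real \<gamma> * group_dist dH pos F + Wt F"
proof -
  define qs where "qs = map pos (sorted_list_of_set F)"
  have lq: "length qs = k" unfolding qs_def using cF by simp
  have sq: "set qs = pos ` F" unfolding qs_def using fF by simp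
  have h1: "dH (pos u # replicate (k - 1) (pos w)) \<le> real \<gamma> * dH qs"
    by (rule dH_sub[OF len_rep lq]) (use sq u w in auto)
  have h2: "dH (pos w # replicate (k - 1) (pos u)) \<le> real \<gamma> * dH qs"
    by (rule dH_sub[OF len_rep lq]) (use sq u w in auto)
  have dd: "d (pos u) (pos w) \<le> 2 * real \<gamma> * group_dist dH pos F"
    using h1 h2 unfolding induced_metric_def group_dist_def qs_def by simp
  define Mx where "Mx = Max (atime ` F)"
  have mu: "atime u \<le> Mx" unfolding Mx_def using fF u by simp
  have mw: "atime w \<le> Mx" unfolding Mx_def using fF w by simp
  have "\<bar>atime u - atime w\<bar> \<le> (Mx - atime u) + (Mx - atime w)" using mu mw by linarith
  also have "\<dots> = (\<Sum>v\<in>{u, w}. Mx - atime v)" using uw by simp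
  also have "\<dots> \<le> (\<Sum>v\<in>F. Mx - atime v)"
  proof (rule sum_mono2[OF fF])
    show "{u, w} \<subseteq> F" using u w by blast
    fix v assume "v \<in> F - {u, w}"
    then show "0 \<le> Mx - atime v" unfolding Mx_def using fF by simp
  qed
  finally have aw: "\<bar>atime u - atime w\<bar> \<le> Wt F" unfolding Wt_def Mx_def .
  have "c0 * thr u w = d (pos u) (pos w) + \<bar>atime u - atime w\<bar>" unfolding thr_eq using c0_pos by simp
  then show ?thesis using dd aw by linarith
qed

lemma dual_sum_self: "dual_sum m y u u = 0"
  unfolding dual_sum_alt by simp

lemma F_bound:
  assumes iv: "gdinv t A M y" and fF: "finite F" and Fm: "F \<subseteq> {..<m}" and cF: "card F = k"
  shows "c0 * (\<Sum>u\<in>F. \<Sum>w\<in>F. dual_sum m y u w) \<le> real k * (real k - 1) * (2 * real \<gamma> * group_dist dH pos F + Wt F)"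
proof -
  note I = invD[OF iv]
  define B where "B = 2 * real \<gamma> * group_dist dH pos F + Wt F"
  have row: "c0 * (\<Sum>w\<in>F. dual_sum m y u w) \<le> (real k - 1) * B" if u: "u \<in> F" for u
  proof -
    have "(\<Sum>w\<in>F. dual_sum m y u w) = dual_sum m y u u + (\<Sum>w\<in>F - {u}. dual_sum m y u w)"
      by (rule sum.remove[OF fF u])
    also have "\<dots> = (\<Sum>w\<in>F - {u}. dual_sum m y u w)" by (simp add: dual_sum_self)
    finally have e: "c0 * (\<Sum>w\<in>F. dual_sum m y u w) = (\<Sum>w\<in>F - {u}. c0 * dual_sum m y u w)"
      by (simp add: sum_distrib_left)
    also have "\<dots> \<le> (\<Sum>w\<in>F - {u}. B)"
    proof (rule sum_mono)
      fix w assume w: "w \<in> F - {u}"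
      have "u < m" "w < m" using u w Fm by auto
      then have "dual_sum m y u w \<le> thr u w" using I(8) w by blast
      then have "c0 * dual_sum m y u w \<le> c0 * thr u w" using c0_pos by simp
      also have "\<dots> \<le> B" unfolding B_def using pair_bound[OF fF cF u] w by blast
      finally show "c0 * dual_sum m y u w \<le> B" .
    qed
    also have "\<dots> = (real k - 1) * B"
    proof -
      have "card (F - {u}) = k - 1" using fF u cF by simp
      moreover have "real (k - 1) = real k - 1" using k2 by (simp add: of_nat_diff)
      ultimately show ?thesis by simp
    qed
    finally show ?thesis .
  qed
  have "c0 * (\<Sum>u\<in>F. \<Sum>w\<in>F. dual_sum m y u w) = (\<Sum>u\<in>F. c0 * (\<Sum>w\<in>F. dual_sum m y u w))"
    by (simp add: sum_distrib_left)
  also have "\<dots> \<le> (\<Sum>u\<in>F. (real k - 1) * B)" by (rule sum_mono) (rule row)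
  also have "\<dots> = real k * (real k - 1) * B" using cF by simp
  finally show ?thesis unfolding B_def .
qed

end

context gd begin

lemma Wt_nonneg: "finite F \<Longrightarrow> 0 \<le> Wt F"
  unfolding Wt_def by (rule sum_nonneg) simp

lemma Yk:
  assumes iv: "gdinv t A M y" and P: "perfect_kmatching k m P"
  shows "real k * Yv y \<le> matching_cost dH atime pos P"
proof -
  note I = invD[OF iv]
  note pf = pkm_fin[OF P]
  define ind :: "nat set \<Rightarrow> nat \<Rightarrow> nat \<Rightarrow> real" where "ind = (\<lambda>S u w. if (u \<in> S) \<noteq> (w \<in> S) then 1 else (0::real))"
  define C where "C = (\<lambda>S. \<Sum>F\<in>P. \<Sum>u\<in>F. \<Sum>w\<in>F. ind S u w)"
  define L where "L = (\<Sum>F\<in>P. \<Sum>u\<in>F. \<Sum>w\<in>F. dual_sum m y u w)"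
  have ds: "dual_sum m y u w = (\<Sum>S\<in>Pow {..<m}. y S * ind S u w)" for u w
    unfolding dual_sum_alt ind_def by (rule sum.cong) auto
  have swap: "L = (\<Sum>S\<in>Pow {..<m}. y S * C S)"
  proof -
    have "L = (\<Sum>F\<in>P. \<Sum>u\<in>F. \<Sum>w\<in>F. \<Sum>S\<in>Pow {..<m}. y S * ind S u w)" unfolding L_def ds by simp
    also have "\<dots> = (\<Sum>F\<in>P. \<Sum>u\<in>F. \<Sum>S\<in>Pow {..<m}. \<Sum>w\<in>F. y S * ind S u w)"
      by (rule sum.cong[OF refl], rule sum.cong[OF refl], rule sum.swap)
    also have "\<dots> = (\<Sum>F\<in>P. \<Sum>S\<in>Pow {..<m}. \<Sum>u\<in>F. \<Sum>w\<in>F. y S * ind S u w)"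
      by (rule sum.cong[OF refl], rule sum.swap)
    also have "\<dots> = (\<Sum>S\<in>Pow {..<m}. \<Sum>F\<in>P. \<Sum>u\<in>F. \<Sum>w\<in>F. y S * ind S u w)"
      by (rule sum.swap)
    also have "\<dots> = (\<Sum>S\<in>Pow {..<m}. y S * C S)"
      unfolding C_def by (simp add: sum_distrib_left)
    finally show ?thesis .
  qed
  have C0: "0 \<le> C S" for S unfolding C_def ind_def by (intro sum_nonneg) simp
  have Cge: "2 * (real k - 1) \<le> C S" if yS: "y S \<noteq> 0" for S
  proof -
    obtain T where T: "T \<in> A" "S \<subseteq> T" using I(4) yS by blast
    then have Sm: "S \<subseteq> {..<m}" using I(1) by blast
    have nd: "\<not> k dvd card S" using I(6) yS by blast
    obtain F0 where F0: "F0 \<in> P" "F0 \<inter> S \<noteq> {}" "F0 - S \<noteq> {}" using cut_exists[OF P Sm nd] by blast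
    have fF0: "finite F0" "card F0 = k" using pf(2) F0(1) by blast+
    have "2 * (real k - 1) \<le> (\<Sum>u\<in>F0. \<Sum>w\<in>F0. ind S u w)"
      unfolding ind_def by (rule cut_ge[OF fF0 F0(2,3)])
    also have "\<dots> \<le> C S" unfolding C_def
      by (rule member_le_sum[OF F0(1) _ pf(1)]) (simp add: ind_def sum_nonneg)
    finally show ?thesis .
  qed
  have lower: "2 * (real k - 1) * Yv y \<le> L"
  proof -
    have "2 * (real k - 1) * Yv y = (\<Sum>S\<in>Pow {..<m}. y S * (2 * (real k - 1)))"
      unfolding Yv_def by (rule sum_distrib_left[THEN trans]) (simp add: mult.commute)
    also have "\<dots> \<le> (\<Sum>S\<in>Pow {..<m}. y S * C S)"
    proof (rule sum_mono)
      fix S show "y S * (2 * (real k - 1)) \<le> y S * C S"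
      proof (cases "y S = 0")
        case False then show ?thesis using Cge[OF False] I(5) by (simp add: mult_left_mono)
      qed simp
    qed
    finally show ?thesis using swap by simp
  qed
  have upper: "c0 * L \<le> 2 * real \<gamma> * real k * (real k - 1) * matching_cost dH atime pos P"
  proof -
    have "c0 * L = (\<Sum>F\<in>P. c0 * (\<Sum>u\<in>F. \<Sum>w\<in>F. dual_sum m y u w))" unfolding L_def by (simp add: sum_distrib_left)
    also have "\<dots> \<le> (\<Sum>F\<in>P. real k * (real k - 1) * (2 * real \<gamma> * group_dist dH pos F + Wt F))"
    proof (rule sum_mono)
      fix F assume "F \<in> P"
      then have "finite F" "F \<subseteq> {..<m}" "card F = k" using pf(2) by blast+
      then show "c0 * (\<Sum>u\<in>F. \<Sum>w\<in>F. dual_sum m y u w) \<le> real k * (real k - 1) * (2 * real \<gamma> * group_dist dH pos F + Wt F)"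
        by (rule F_bound[OF iv])
    qed
    also have "\<dots> \<le> (\<Sum>F\<in>P. 2 * real \<gamma> * real k * (real k - 1) * (group_dist dH pos F + Wt F))"
    proof (rule sum_mono)
      fix F assume F: "F \<in> P"
      have W0: "0 \<le> Wt F" using Wt_nonneg pf(2) F by blast
      have g1: "1 \<le> 2 * real \<gamma>" using gam1 by simp
      have "1 * Wt F \<le> 2 * real \<gamma> * Wt F" by (rule mult_right_mono[OF g1 W0])
      then have "Wt F \<le> 2 * real \<gamma> * Wt F" by simp
      then have "2 * real \<gamma> * group_dist dH pos F + Wt F \<le> 2 * real \<gamma> * (group_dist dH pos F + Wt F)"
        by (simp add: algebra_simps)
      moreover have "0 \<le> real k * (real k - 1)" using k2 by simp
      ultimately have "real k * (real k - 1) * (2 * real \<gamma> * group_dist dH pos F + Wt F)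
            \<le> real k * (real k - 1) * (2 * real \<gamma> * (group_dist dH pos F + Wt F))"
        by (rule mult_left_mono)
      then show "real k * (real k - 1) * (2 * real \<gamma> * group_dist dH pos F + Wt F)
            \<le> 2 * real \<gamma> * real k * (real k - 1) * (group_dist dH pos F + Wt F)"
        by (simp only: mult_ac)
    qed
    also have "\<dots> = 2 * real \<gamma> * real k * (real k - 1) * matching_cost dH atime pos P"
      unfolding matching_cost_def Wt_def by (simp add: sum_distrib_left)
    finally show ?thesis .
  qed
  have pos: "0 < 2 * real \<gamma> * real k * (real k - 1)" using gam1 k2 by simp
  have "2 * real \<gamma> * real k * (real k - 1) * (real k * Yv y) = c0 * (2 * (real k - 1) * Yv y)"
    unfolding c0_def by (simp add: power2_eq_square mult_ac)
  also have "\<dots> \<le> c0 * L" using lower c0_pos by (simp add: mult_left_mono)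
  also have "\<dots> \<le> 2 * real \<gamma> * real k * (real k - 1) * matching_cost dH atime pos P" by (rule upper)
  finally have h: "2 * real \<gamma> * real k * (real k - 1) * (real k * Yv y) \<le> 2 * real \<gamma> * real k * (real k - 1) * matching_cost dH atime pos P" .
  show ?thesis by (rule mult_left_le_imp_le[OF h pos])
qed

end

lemma exists_pkm:
  assumes k: "0 < k" and kd: "k dvd m"
  shows "perfect_kmatching k m ((\<lambda>i. {i * k..<(i + 1) * k}) ` {..<m div k})"
proof -
  define F where "F = (\<lambda>i. {i * k..<(i + 1) * k})"
  have mk: "m div k * k = m" using kd by simp
  have Fsub: "F i \<subseteq> {..<m}" if "i < m div k" for i
  proof -
    have "i + 1 \<le> m div k" using that by simp
    then have "(i + 1) * k \<le> m div k * k" by (rule mult_le_mono1)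
    then show ?thesis unfolding F_def using mk by auto
  qed
  have cardF: "card (F i) = k" for i unfolding F_def by simp
  have mem: "v \<in> F (v div k)" for v
  proof -
    have "v div k * k \<le> v" by (simp add: div_times_less_eq_dividend)
    moreover have "v < (v div k + 1) * k"
    proof -
      have "v < k + v div k * k" by (rule dividend_less_div_times[OF k])
      then show ?thesis by (simp add: algebra_simps)
    qed
    ultimately show ?thesis unfolding F_def by simp
  qed
  have lt: "v div k < m div k" if "v < m" for v
  proof -
    have "v div k * k \<le> v" by (simp add: div_times_less_eq_dividend)
    then have "v div k * k < m div k * k" using that mk by linarith
    then show ?thesis by simp
  qed
  have dj: "F i \<inter> F j = {}" if "i < j" for i j
  proof -
    have "(i + 1) * k \<le> j * k" using that by (intro mult_le_mono1) simp
    then show ?thesis unfolding F_def by auto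
  qed
  show ?thesis unfolding perfect_kmatching_def F_def[symmetric]
  proof (intro conjI)
    show "\<forall>G\<in>F ` {..<m div k}. G \<subseteq> {..<m} \<and> card G = k"
    proof
      fix G assume "G \<in> F ` {..<m div k}"
      then obtain i where "i < m div k" "G = F i" by blast
      then show "G \<subseteq> {..<m} \<and> card G = k" using Fsub cardF by simp
    qed
    show "\<Union>(F ` {..<m div k}) = {..<m}"
    proof
      show "\<Union>(F ` {..<m div k}) \<subseteq> {..<m}"
      proof
        fix v assume "v \<in> \<Union>(F ` {..<m div k})"
        then obtain i where "i < m div k" "v \<in> F i" by blast
        then show "v \<in> {..<m}" using Fsub by blast
      qed
      show "{..<m} \<subseteq> \<Union>(F ` {..<m div k})"
      proof
        fix v assume "v \<in> {..<m}"
        then have "v div k \<in> {..<m div k}" using lt by simp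
        then show "v \<in> \<Union>(F ` {..<m div k})" using mem by blast
      qed
    qed
    show "\<forall>G\<in>F ` {..<m div k}. \<forall>H\<in>F ` {..<m div k}. G \<noteq> H \<longrightarrow> G \<inter> H = {}"
    proof (intro ballI impI)
      fix G H assume "G \<in> F ` {..<m div k}" "H \<in> F ` {..<m div k}" "G \<noteq> H"
      then obtain i j where ij: "G = F i" "H = F j" "i \<noteq> j" by blast
      then consider "i < j" | "j < i" by linarith
      then show "G \<inter> H = {}"
      proof cases
        case 1 then show ?thesis using dj[OF 1] ij by blast
      next
        case 2 then show ?thesis using dj[OF 2] ij by (simp add: Int_commute)
      qed
    qed
  qed
qed

lemma OPT_attained:
  assumes k: "0 < k" and kd: "k dvd m"
  shows "\<exists>P. perfect_kmatching k m P \<and> OPT k m dH atime pos = matching_cost dH atime pos P"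
proof -
  define Ms where "Ms = {P. perfect_kmatching k m P}"
  have "Ms \<subseteq> Pow (Pow {..<m})" unfolding Ms_def perfect_kmatching_def by blast
  then have fin: "finite Ms" by (rule finite_subset) simp
  have ne: "Ms \<noteq> {}" using exists_pkm[OF k kd] unfolding Ms_def by blast
  have "OPT k m dH atime pos \<in> matching_cost dH atime pos ` Ms"
    unfolding OPT_def Ms_def[symmetric] using fin ne by (intro Min_in) simp_all
  then show ?thesis unfolding Ms_def by blast
qed

context gd begin

lemma final_bound:
  assumes iv: "gdinv t A M y" and mt: "matched M = {..<m}" and kd: "k dvd m"
  shows "alg_cost dH atime pos M \<le> real ((4 * m * k + k ^ 2) * \<gamma>) * OPT k m dH atime pos"
proof -
  note I = invD[OF iv]
  have k0: "0 < k" using k2 by simp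
  obtain P where P: "perfect_kmatching k m P" "OPT k m dH atime pos = matching_cost dH atime pos P"
    using OPT_attained[OF k0 kd] by blast
  have kY: "real k * Yv y \<le> OPT k m dH atime pos" using Yk[OF iv P(1)] P(2) by simp
  have Y0: "0 \<le> Yv y" using Yv_nonneg I(5) by blast
  have O0: "0 \<le> OPT k m dH atime pos" using kY Y0 k2 by (meson mult_nonneg_nonneg of_nat_0_le_iff order_trans)
  have split: "alg_cost dH atime pos M = (\<Sum>p\<in>M. group_dist dH pos (fst p)) + (\<Sum>p\<in>M. \<Sum>v\<in>fst p. snd p - atime v)"
    unfolding alg_cost_def by (simp add: split_def sum.distrib)
  have "\<Union>A \<subseteq> {..<m}" using I(1) by blast
  then have fe: "\<Union>A - matched M = {}" using mt by blast
  have WC: "(\<Sum>p\<in>M. \<Sum>v\<in>fst p. snd p - atime v) \<le> real (k - 1) * c0 * Yv y"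
    using I(14) unfolding fe by simp
  have cardM: "k * card M = m"
  proof -
    have inj: "inj_on fst M"
    proof (rule inj_onI)
      fix p q assume p: "p \<in> M" and q: "q \<in> M" and e: "fst p = fst q"
      show "p = q"
      proof (rule ccontr)
        assume "p \<noteq> q"
        then have "fst p \<inter> fst q = {}" using I(11) p q by blast
        then have "fst p = {}" using e by simp
        moreover have "card (fst p) = k" using I(10) p by blast
        ultimately show False using k2 by simp
      qed
    qed
    have djf: "pairwise disjnt (fst ` M)"
    proof (rule pairwiseI)
      fix G H assume "G \<in> fst ` M" "H \<in> fst ` M" "G \<noteq> H"
      then obtain p q where "p \<in> M" "q \<in> M" "G = fst p" "H = fst q" "p \<noteq> q" by blast
      then show "disjnt G H" using I(11) by (simp add: disjnt_def)
    qed
    have cG: "\<forall>G\<in>fst ` M. card G = k" using I(10) by auto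
    have fG: "\<forall>G\<in>fst ` M. finite G"
    proof
      fix G assume "G \<in> fst ` M"
      then have "card G = k" using cG by blast
      then show "finite G" using k2 card.infinite by fastforce
    qed
    have "m = card (matched M)" using mt by simp
    also have "\<dots> = sum card (fst ` M)" unfolding matched_def
      by (rule card_Union_disjoint[OF djf]) (use fG in blast)
    also have "\<dots> = sum (\<lambda>G. k) (fst ` M)" by (rule sum.cong) (use cG in auto)
    also have "\<dots> = k * card M" using card_image[OF inj] by simp
    finally show ?thesis by simp
  qed
  have DC: "(\<Sum>p\<in>M. group_dist dH pos (fst p)) \<le> 2 * c0 * real m * Yv y"
  proof -
    have "real k * real (card M) = real m" using cardM by (metis of_nat_mult)
    then have "2 * c0 * real k * real (card M) * Yv y = 2 * c0 * real m * Yv y"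
      by (metis mult.assoc)
    then show ?thesis using I(15) by linarith
  qed
  have km1: "real (k - 1) = real k - 1" using k2 by (simp add: of_nat_diff)
  have "alg_cost dH atime pos M \<le> (real k - 1) * c0 * Yv y + 2 * c0 * real m * Yv y"
    using split WC DC km1 by simp
  also have "\<dots> = (real \<gamma> * real k * (real k - 1 + 2 * real m)) * (real k * Yv y)"
    unfolding c0_def by (simp add: power2_eq_square algebra_simps)
  also have "\<dots> \<le> (real \<gamma> * real k * (real k - 1 + 2 * real m)) * OPT k m dH atime pos"
  proof (rule mult_left_mono[OF kY])
    show "0 \<le> real \<gamma> * real k * (real k - 1 + 2 * real m)" using k2 by simp
  qed
  also have "\<dots> \<le> real ((4 * m * k + k ^ 2) * \<gamma>) * OPT k m dH atime pos"
  proof (rule mult_right_mono[OF _ O0])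
    have "real k * (real k - 1 + 2 * real m) \<le> 4 * real m * real k + real k ^ 2"
      by (simp add: power2_eq_square algebra_simps)
    then have "real \<gamma> * (real k * (real k - 1 + 2 * real m)) \<le> real \<gamma> * (4 * real m * real k + real k ^ 2)"
      by (rule mult_left_mono) simp
    then show "real \<gamma> * real k * (real k - 1 + 2 * real m) \<le> real ((4 * m * k + k ^ 2) * \<gamma>)"
      by (simp add: mult_ac)
  qed
  finally show ?thesis .
qed

end

theorem theorem2:
  fixes dH :: "'p list \<Rightarrow> real" and k \<gamma> m :: nat
    and atime :: "nat \<Rightarrow> real" and pos :: "nat \<Rightarrow> 'p"
    and M :: "(nat set \<times> real) set"
  assumes "k \<ge> 2"
    and "H_metric k \<gamma> dH"
    and "k dvd m"
    and "\<forall>v<m. 0 \<le> atime v"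
    and "\<forall>i j. i \<le> j \<longrightarrow> j < m \<longrightarrow> atime i \<le> atime j"
    and "gd_run k \<gamma> (1 / (real \<gamma> * real k ^ 2)) dH m atime pos M"
  shows "alg_cost dH atime pos M \<le> real ((4 * m * k + k ^ 2) * \<gamma>) * OPT k m dH atime pos"
proof -
  interpret gd k \<gamma> dH m atime pos
    by (rule gd.intro, rule gdk.intro) (use assms(1,2) in auto)
  have rr: "r = 1 / (real \<gamma> * real k ^ 2)" unfolding r_def c0_def by simp
  obtain t A y where reach: "(gd_step k \<gamma> r dH m atime pos)\<^sup>*\<^sup>* gd_init (t, A, M, y)" and mt: "matched M = {..<m}"
    using assms(6) unfolding gd_run_def rr by blast
  have "gdinv t A M y" using reach_inv[OF reach] unfolding ginv_def by simp
  then show ?thesis using final_bound mt assms(3) by blast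
qed

end
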